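(* Let $X=\{a_1,\dots,a_\ell\}$ be a finite set of $\ell$ distinct points, let $N\ge 2$, let $c_N: X^N\to\mathbb{R}\cup\{+\infty\}$ be an arbitrary cost function, and let $\lambda_*\in\mathcal{P}(X)$. (a) The Kantorovich problem $$\text{minimize } C[\gamma]=\int_{X^N} c_N(x_1,\dots,x_N)\,d\gamma(x_1,\dots,x_N)\ \text{ over }\gamma\in\mathcal{P}_{sym}(X^N)\text{ subject to } M_1\gamma=\lambda_*$$ admits a minimizer which is an SAE state with marginal $\lambda_*$. Moreover, when $c_N$ is symmetric (i.e. invariant under permutations of its $N$ arguments), this SAE state also minimizes $C[\gamma]$ over all $\gamma\in\mathcal{P}(X^N)$ all of whose one-point marginals equal $\lambda_*$. (b) If in addition $c_N(x_1,\dots,x_N)=\sum_{1\le i<j\le N}c(x_i,x_j)$ for some $c:X\times X\to\mathbb{R}\cup\{+\infty\}$, then the minimum value of the Kantorovich problem in (a) equals the minimum of $$I[\alpha,\lambda^{(1)},\dots,\lambda^{(\ell)}]=\sum_{\nu=1}^\ell \alpha^{(\nu)}\Big(\tfrac{N^2}{2}\int_{X\times X}c(x,y)\,d\lambda^{(\nu)}(x)\,d\lambda^{(\nu)}(y)-\tfrac N2\int_X c(x,x)\,d\lambda^{(\nu)}(x)\Big)$$ over $\alpha=(\alpha^{(1)},\dots,\alpha^{(\ell)})\in\mathbb{R}^\ell$ and $\lambda^{(1)},\dots,\lambda^{(\ell)}\in\mathcal{P}_{\frac1N}(X)$ subject to $\alpha^{(\nu)}\ge 0$ for all $\nu$ and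 $\sum_{\nu=1}^\ell\alpha^{(\nu)}\lambda^{(\nu)}=\lambda_*$. Moreover, if $(\alpha,\lambda^{(1)},\dots,\lambda^{(\ell)})$ is any minimizer of this reduced problem, then $\gamma=\sum_{\nu=1}^\ell\alpha^{(\nu)}\psi_N(\lambda^{(\nu)})$ is a minimizer of the Kantorovich problem in (a).
   Context: $\mathcal{P}(X)$ denotes the probability measures on $X$ (identified with vectors $(\lambda_1,\dots,\lambda_\ell)$, $\lambda_i=\lambda(\{a_i\})$), and $\delta_i$ the Dirac measure at $a_i$. The symmetrization operator $S$ on measures on $X^N$ is $(S\gamma)(A_1\times\cdots\times A_N)=\frac1{N!}\sum_{\sigma\in S_N}\gamma(A_{\sigma(1)}\times\cdots\times A_{\sigma(N)})$; $\mathcal{P}_{sym}(X^N)$ is the set of probability measures $\gamma$ on $X^N$ with $S\gamma=\gamma$. For $\gamma\in\mathcal{P}(X^N)$, $M_1\gamma$ is its first one-point marginal, $(M_1\gamma)(A)=\gamma(A\times X^{N-1})$. $\mathcal{P}_{\frac1N}(X)=\{\lambda\in\mathcal{P}(X):\lambda_i\in\frac1N\mathbb{Z}\ \forall i\}$. For $\lambda\in\mathcal{P}_{\frac1N}(X)$, $\psi_N(\lambda)=S(\delta_{a_{i_1}}\otimes\cdots\otimes\delta_{a_{i_N}})$ where $i_1\le\dots\le i_N$ is the unique nondecreasing index sequence in which each index $i$ appears exactly $N\lambda_i$ times. An SAE state with marginal $\lambda_*$ is a probability measure on $X^N$ of the form $\gamma=\sum_{\nu=1}^\ell\alpha^{(\nu)}S(\delta_{T_1(a_\nu)}\otimes\cdots\otimes\delta_{T_N(a_\nu)})$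 for some maps $T_1,\dots,T_N:X\to X$ and weights $\alpha^{(\nu)}\ge 0$ such that $\sum_{\nu=1}^\ell\alpha^{(\nu)}\lambda^{(\nu)}=\lambda_*$, where $\lambda^{(\nu)}=\frac1N\sum_{k=1}^N\delta_{T_k(a_\nu)}$. *)

theory Defs
  imports "HOL-Analysis.Analysis" "HOL-Library.Extended_Real" "HOL-Combinatorics.Permutations"
begin

text \<open>The finite set X = {a_1,...,a_l} is the finite type 'a (l = CARD('a)); the index
  order on the points is the linear order on 'a. Points of X^N are lists of length N.
  Measures on finite sets are identified with their point-mass functions.\<close>

definition configs :: "nat \<Rightarrow> 'a list set" where
  "configs N = {xs. length xs = N}"

definition is_prob :: "('a::finite \<Rightarrow> real) \<Rightarrow> bool" where
  "is_prob lam \<longleftrightarrow> (\<forall>a. lam a \<ge> 0) \<and> (\<Sum>a\<in>UNIV. lam a) = 1"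

definition is_prob_N :: "nat \<Rightarrow> ('a::finite list \<Rightarrow> real) \<Rightarrow> bool" where
  "is_prob_N N \<gamma> \<longleftrightarrow> (\<forall>xs. \<gamma> xs \<ge> 0) \<and> (\<forall>xs. length xs \<noteq> N \<longrightarrow> \<gamma> xs = 0)
     \<and> (\<Sum>xs\<in>configs N. \<gamma> xs) = 1"

definition perm_config :: "(nat \<Rightarrow> nat) \<Rightarrow> 'a list \<Rightarrow> 'a list" where
  "perm_config \<sigma> xs = map (\<lambda>i. xs ! \<sigma> i) [0..<length xs]"

definition symmetrize :: "nat \<Rightarrow> ('a list \<Rightarrow> real) \<Rightarrow> 'a list \<Rightarrow> real" where
  "symmetrize N \<gamma> xs = (if length xs = N then
     (1 / fact N) * (\<Sum>\<sigma>\<in>{\<sigma>. \<sigma> permutes {0..<N}}. \<gamma> (perm_config \<sigma> xs)) else 0)"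

definition sym_prob :: "nat \<Rightarrow> ('a::finite list \<Rightarrow> real) \<Rightarrow> bool" where
  "sym_prob N \<gamma> \<longleftrightarrow> is_prob_N N \<gamma> \<and> symmetrize N \<gamma> = \<gamma>"

text \<open>k-th one-point marginal (k = 0 is the first one, M_1)\<close>
definition marg :: "nat \<Rightarrow> nat \<Rightarrow> ('a::finite list \<Rightarrow> real) \<Rightarrow> 'a \<Rightarrow> real" where
  "marg N k \<gamma> a = (\<Sum>xs\<in>{xs\<in>configs N. xs ! k = a}. \<gamma> xs)"

text \<open>C[gamma] = integral of the cost (values in R \<union> {+\<infinity>}, convention 0 * \<infinity> = 0)\<close>
definition cost :: "nat \<Rightarrow> ('a::finite list \<Rightarrow> ereal) \<Rightarrow> ('a list \<Rightarrow> real) \<Rightarrow> ereal" where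
  "cost N cN \<gamma> = (\<Sum>xs\<in>configs N. ereal (\<gamma> xs) * cN xs)"

definition dirac_cfg :: "'a list \<Rightarrow> 'a list \<Rightarrow> real" where
  "dirac_cfg ys xs = (if xs = ys then 1 else 0)"

definition emp :: "nat \<Rightarrow> (nat \<Rightarrow> 'a \<Rightarrow> 'a) \<Rightarrow> 'a \<Rightarrow> 'a \<Rightarrow> real" where
  "emp N T \<nu> a = (1 / real N) * real (card {k. k < N \<and> T k \<nu> = a})"

text \<open>SAE state with marginal lam (maps T_1..T_N are T 0 .. T (N-1))\<close>
definition SAE :: "nat \<Rightarrow> ('a::finite \<Rightarrow> real) \<Rightarrow> ('a list \<Rightarrow> real) \<Rightarrow> bool" where
  "SAE N lam \<gamma> \<longleftrightarrow> (\<exists>(T :: nat \<Rightarrow> 'a \<Rightarrow> 'a) (\<alpha> :: 'a \<Rightarrow> real).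
     (\<forall>\<nu>. \<alpha> \<nu> \<ge> 0) \<and>
     (\<forall>a. (\<Sum>\<nu>\<in>UNIV. \<alpha> \<nu> * emp N T \<nu> a) = lam a) \<and>
     \<gamma> = (\<lambda>xs. \<Sum>\<nu>\<in>UNIV. \<alpha> \<nu> * symmetrize N (dirac_cfg (map (\<lambda>k. T k \<nu>) [0..<N])) xs))"

definition kant_adm :: "nat \<Rightarrow> ('a::finite \<Rightarrow> real) \<Rightarrow> ('a list \<Rightarrow> real) \<Rightarrow> bool" where
  "kant_adm N lam \<gamma> \<longleftrightarrow> sym_prob N \<gamma> \<and> marg N 0 \<gamma> = lam"

definition kant_min :: "nat \<Rightarrow> ('a::finite list \<Rightarrow> ereal) \<Rightarrow> ('a \<Rightarrow> real) \<Rightarrow> ('a list \<Rightarrow> real) \<Rightarrow> bool" where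
  "kant_min N cN lam \<gamma> \<longleftrightarrow> kant_adm N lam \<gamma> \<and>
     (\<forall>\<gamma>'. kant_adm N lam \<gamma>' \<longrightarrow> cost N cN \<gamma> \<le> cost N cN \<gamma>')"

definition prob_1N :: "nat \<Rightarrow> ('a::finite \<Rightarrow> real) \<Rightarrow> bool" where
  "prob_1N N lam \<longleftrightarrow> is_prob lam \<and> (\<forall>a. real N * lam a \<in> \<int>)"

definition psi :: "nat \<Rightarrow> ('a::{finite,linorder} \<Rightarrow> real) \<Rightarrow> 'a list \<Rightarrow> real" where
  "psi N lam = symmetrize N (dirac_cfg
     (THE ys. sorted ys \<and> (\<forall>a. real (count_list ys a) = real N * lam a)))"

text \<open>reduced functional I; the two integrals are combined into one sum with coefficient
  N^2/2 lam(x) lam(y) - [x=y] N/2 lam(x) in front of c(x,y) (avoids \<infinity> - \<infinity>)\<close>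
definition I_red :: "nat \<Rightarrow> ('a::finite \<Rightarrow> 'a \<Rightarrow> ereal) \<Rightarrow> ('a \<Rightarrow> real) \<Rightarrow> ('a \<Rightarrow> 'a \<Rightarrow> real) \<Rightarrow> ereal" where
  "I_red N c \<alpha> \<Lambda> = (\<Sum>\<nu>\<in>UNIV. ereal (\<alpha> \<nu>) *
     (\<Sum>x\<in>UNIV. \<Sum>y\<in>UNIV.
        ereal ((real N)^2 / 2 * \<Lambda> \<nu> x * \<Lambda> \<nu> y - (if x = y then real N / 2 * \<Lambda> \<nu> x else 0)) * c x y))"

definition red_adm :: "nat \<Rightarrow> ('a::finite \<Rightarrow> real) \<Rightarrow> ('a \<Rightarrow> real) \<Rightarrow> ('a \<Rightarrow> 'a \<Rightarrow> real) \<Rightarrow> bool" where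
  "red_adm N lam \<alpha> \<Lambda> \<longleftrightarrow> (\<forall>\<nu>. \<alpha> \<nu> \<ge> 0) \<and> (\<forall>\<nu>. prob_1N N (\<Lambda> \<nu>)) \<and>
     (\<forall>a. (\<Sum>\<nu>\<in>UNIV. \<alpha> \<nu> * \<Lambda> \<nu> a) = lam a)"

definition red_min :: "nat \<Rightarrow> ('a::finite \<Rightarrow> 'a \<Rightarrow> ereal) \<Rightarrow> ('a \<Rightarrow> real) \<Rightarrow> ('a \<Rightarrow> real) \<Rightarrow> ('a \<Rightarrow> 'a \<Rightarrow> real) \<Rightarrow> bool" where
  "red_min N c lam \<alpha> \<Lambda> \<longleftrightarrow> red_adm N lam \<alpha> \<Lambda> \<and>
     (\<forall>\<alpha>' \<Lambda>'. red_adm N lam \<alpha>' \<Lambda>' \<longrightarrow> I_red N c \<alpha> \<Lambda> \<le> I_red N c \<alpha>' \<Lambda>')"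

end

theory Submission
  imports Defs
begin


lemma card_indep:
  fixes v :: "'b \<Rightarrow> real^'a::finite"
  assumes fin: "finite S" and ind: "\<And>d. (\<Sum>s\<in>S. d s *\<^sub>R v s) = 0 \<Longrightarrow> (\<forall>s\<in>S. d s = 0)"
  shows "card S \<le> CARD('a)"
proof -
  have inj: "inj_on v S"
  proof (rule inj_onI, rule ccontr)
    fix s1 s2 assume s: "s1 \<in> S" "s2 \<in> S" "v s1 = v s2" "s1 \<noteq> s2"
    define d where "d s = (if s = s1 then 1 else if s = s2 then -1 else (0::real))" for s
    have "(\<Sum>s\<in>S. d s *\<^sub>R v s) = (\<Sum>s\<in>{s1,s2}. d s *\<^sub>R v s)"
      by (rule sum.mono_neutral_right) (use fin s in \<open>auto simp: d_def\<close>)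
    also have "\<dots> = 0" using s by (simp add: d_def)
    finally have "\<forall>s\<in>S. d s = 0" by (rule ind)
    then show False using s by (auto simp: d_def)
  qed
  have "independent (v ` S)"
  proof
    assume "dependent (v ` S)"
    then obtain u where u: "\<exists>x\<in>v ` S. u x \<noteq> 0" "(\<Sum>x\<in>v ` S. u x *\<^sub>R x) = 0"
      using fin by (auto simp: dependent_finite)
    have "(\<Sum>s\<in>S. u (v s) *\<^sub>R v s) = 0" using u(2) by (simp add: sum.reindex[OF inj])
    then have "\<forall>s\<in>S. u (v s) = 0" by (rule ind)
    then show False using u(1) by auto
  qed
  then have "card (v ` S) \<le> DIM(real^'a)" using independent_bound by blast
  then show ?thesis using card_image[OF inj] by simp
qed



lemma finite_configs[simp]: "finite (configs N :: 'a::finite list set)"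
proof -
  have "configs N = {xs::'a list. set xs \<subseteq> UNIV \<and> length xs = N}" by (auto simp: configs_def)
  then show ?thesis using finite_lists_length_eq[of "UNIV::'a set" N] by simp
qed

lemma in_configs[simp]: "xs \<in> configs N \<longleftrightarrow> length xs = N"
  by (simp add: configs_def)

lemma length_perm_config[simp]: "length (perm_config \<sigma> xs) = length xs"
  by (simp add: perm_config_def)

lemma nth_perm_config: "i < length xs \<Longrightarrow> perm_config \<sigma> xs ! i = xs ! \<sigma> i"
  by (simp add: perm_config_def)

lemma perm_config_comp:
  assumes "\<sigma> permutes {0..<length xs}"
  shows "perm_config \<sigma> (perm_config \<tau> xs) = perm_config (\<tau> \<circ> \<sigma>) xs"
proof (rule nth_equalityI)
  fix i assume i: "i < length (perm_config \<sigma> (perm_config \<tau> xs))"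
  then have "\<sigma> i < length xs" using permutes_in_image[OF assms] by simp
  then show "perm_config \<sigma> (perm_config \<tau> xs) ! i = perm_config (\<tau> \<circ> \<sigma>) xs ! i"
    using i by (simp add: nth_perm_config)
qed simp

lemma perm_config_id[simp]: "perm_config id xs = xs" "perm_config (\<lambda>a. a) xs = xs"
  by (rule nth_equalityI; auto simp: nth_perm_config)+

lemma perm_config_inv1:
  assumes "\<sigma> permutes {0..<N}" "length xs = N"
  shows "perm_config (inv \<sigma>) (perm_config \<sigma> xs) = xs"
proof -
  have "inv \<sigma> permutes {0..<length xs}" using assms permutes_inv by blast
  then have "perm_config (inv \<sigma>) (perm_config \<sigma> xs) = perm_config (\<sigma> \<circ> inv \<sigma>) xs"
    by (rule perm_config_comp)
  also have "\<sigma> \<circ> inv \<sigma> = id" by (rule permutes_inv_o(1)[OF assms(1)])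
  finally show ?thesis by simp
qed

lemma perm_config_inv2:
  assumes "\<sigma> permutes {0..<N}" "length xs = N"
  shows "perm_config \<sigma> (perm_config (inv \<sigma>) xs) = xs"
proof -
  have "\<sigma> permutes {0..<length xs}" using assms by simp
  then have "perm_config \<sigma> (perm_config (inv \<sigma>) xs) = perm_config (inv \<sigma> \<circ> \<sigma>) xs"
    by (rule perm_config_comp)
  also have "inv \<sigma> \<circ> \<sigma> = id" by (rule permutes_inv_o(2)[OF assms(1)])
  finally show ?thesis by simp
qed

lemma perm_config_eq_iff:
  assumes "\<sigma> permutes {0..<N}" "length xs = N" "length ys = N"
  shows "perm_config \<sigma> xs = ys \<longleftrightarrow> xs = perm_config (inv \<sigma>) ys"
proof
  assume "perm_config \<sigma> xs = ys"
  then show "xs = perm_config (inv \<sigma>) ys" using perm_config_inv1[OF assms(1,2)] by simp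
next
  assume "xs = perm_config (inv \<sigma>) ys"
  then show "perm_config \<sigma> xs = ys" using perm_config_inv2[OF assms(1,3)] by simp
qed

lemma bij_perm_config:
  assumes "\<sigma> permutes {0..<N}"
  shows "bij_betw (perm_config \<sigma>) (configs N) (configs N)"
proof (rule bij_betw_byWitness[where f'="perm_config (inv \<sigma>)"])
  show "\<forall>a\<in>configs N. perm_config (inv \<sigma>) (perm_config \<sigma> a) = a"
    by (intro ballI perm_config_inv1[OF assms]) simp
  show "\<forall>a\<in>configs N. perm_config \<sigma> (perm_config (inv \<sigma>) a) = a"
    by (intro ballI perm_config_inv2[OF assms]) simp
qed auto

lemma card_perms: "card {\<sigma>. \<sigma> permutes {0..<(N::nat)}} = fact N"
  by (simp add: card_permutations)

lemma finite_perms[simp]: "finite {\<sigma>. \<sigma> permutes {0..<(N::nat)}}"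
  by (rule finite_permutations) simp

lemma sum_perms_const: "(\<Sum>\<sigma>\<in>{\<sigma>. \<sigma> permutes {0..<(N::nat)}}. (c::real)) = fact N * c"
  by (simp add: card_perms)

lemma symmetrize_lin:
  fixes g :: "'i \<Rightarrow> 'a list \<Rightarrow> real"
  shows "symmetrize N (\<lambda>xs. \<Sum>i\<in>I. \<alpha> i * g i xs) = (\<lambda>xs. \<Sum>i\<in>I. \<alpha> i * symmetrize N (g i) xs)"
proof (rule ext)
  fix xs
  show "symmetrize N (\<lambda>xs. \<Sum>i\<in>I. \<alpha> i * g i xs) xs = (\<Sum>i\<in>I. \<alpha> i * symmetrize N (g i) xs)"
    unfolding symmetrize_def
    by (simp add: sum_distrib_left mult_ac sum.swap[of _ "{\<sigma>. \<sigma> permutes {0..<N}}"])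
qed

lemma symmetrize_idem: "symmetrize N (symmetrize N \<gamma>) = symmetrize N \<gamma>"
proof (rule ext)
  fix xs :: "'a list"
  let ?P = "{\<sigma>. \<sigma> permutes {0..<N}}"
  show "symmetrize N (symmetrize N \<gamma>) xs = symmetrize N \<gamma> xs"
  proof (cases "length xs = N")
    case True
    have "symmetrize N (symmetrize N \<gamma>) xs =
      1 / fact N * (\<Sum>\<sigma>\<in>?P. 1 / fact N * (\<Sum>\<tau>\<in>?P. \<gamma> (perm_config (\<sigma> \<circ> \<tau>) xs)))"
      using True by (auto simp: symmetrize_def perm_config_comp intro!: sum.cong)
    also have "\<dots> = 1 / fact N * (\<Sum>\<sigma>\<in>?P. 1 / fact N * (\<Sum>\<tau>\<in>?P. \<gamma> (perm_config \<tau> xs)))"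
    proof -
      have inner: "(\<Sum>\<tau>\<in>?P. \<gamma> (perm_config (\<sigma> \<circ> \<tau>) xs)) = (\<Sum>\<tau>\<in>?P. \<gamma> (perm_config \<tau> xs))"
        if "\<sigma> \<in> ?P" for \<sigma>
        using setum_permutations_compose_left[of \<sigma> "{0..<N}" "\<lambda>\<tau>. \<gamma> (perm_config \<tau> xs)"] that by simp
      show ?thesis using inner by (auto intro!: sum.cong)
    qed
    also have "\<dots> = symmetrize N \<gamma> xs"
      using True by (simp add: symmetrize_def sum_perms_const card_perms)
    finally show ?thesis .
  qed (simp add: symmetrize_def)
qed

definition Dc :: "nat \<Rightarrow> 'a list \<Rightarrow> 'a list \<Rightarrow> real" where
  "Dc N ys = symmetrize N (dirac_cfg ys)"

lemma Dc_nonneg: "Dc N ys xs \<ge> 0"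
  unfolding Dc_def symmetrize_def dirac_cfg_def by (auto intro!: divide_nonneg_nonneg sum_nonneg)

lemma Dc_alt:
  assumes "length ys = N"
  shows "Dc N ys xs = (if length xs = N then
     (\<Sum>\<sigma>\<in>{\<sigma>. \<sigma> permutes {0..<N}}. if xs = perm_config (inv \<sigma>) ys then 1 / fact N else 0) else 0)"
  using assms by (auto simp: Dc_def symmetrize_def dirac_cfg_def sum_distrib_left perm_config_eq_iff
      intro!: sum.cong)

lemma symmetrize_decomp:
  fixes \<gamma> :: "'a::finite list \<Rightarrow> real"
  shows "symmetrize N \<gamma> = (\<lambda>xs. \<Sum>ys\<in>configs N. \<gamma> ys * Dc N ys xs)"
proof (rule ext)
  fix xs :: "'a list"
  show "symmetrize N \<gamma> xs = (\<Sum>ys\<in>configs N. \<gamma> ys * Dc N ys xs)"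
  proof (cases "length xs = N")
    case True
    have "(\<Sum>ys\<in>configs N. \<gamma> ys * Dc N ys xs) =
       1 / fact N * (\<Sum>\<sigma>\<in>{\<sigma>. \<sigma> permutes {0..<N}}. \<Sum>ys\<in>configs N. \<gamma> ys * dirac_cfg ys (perm_config \<sigma> xs))"
      using True by (simp add: Dc_def symmetrize_def sum_distrib_left mult_ac sum.swap[of _ "configs N"])
    also have "\<dots> = 1 / fact N * (\<Sum>\<sigma>\<in>{\<sigma>. \<sigma> permutes {0..<N}}. \<gamma> (perm_config \<sigma> xs))"
      using True by (intro arg_cong2[where f="(*)"] refl sum.cong) (simp add: dirac_cfg_def if_distrib sum.delta' cong: if_cong)
    finally show ?thesis using True by (simp add: symmetrize_def)
  qed (simp add: symmetrize_def Dc_def)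
qed

lemma sum_symmetrize:
  fixes \<gamma> :: "'a::finite list \<Rightarrow> real"
  shows "(\<Sum>xs\<in>configs N. symmetrize N \<gamma> xs) = (\<Sum>xs\<in>configs N. \<gamma> xs)"
proof -
  let ?P = "{\<sigma>. \<sigma> permutes {0..<N}}"
  have "(\<Sum>xs\<in>configs N. symmetrize N \<gamma> xs) = 1 / fact N * (\<Sum>\<sigma>\<in>?P. \<Sum>xs\<in>configs N. \<gamma> (perm_config \<sigma> xs))"
    by (simp add: symmetrize_def sum_distrib_left sum.swap[of _ "configs N"])
  also have "\<dots> = 1 / fact N * (\<Sum>\<sigma>\<in>?P. \<Sum>xs\<in>configs N. \<gamma> xs)"
  proof -
    have inner: "(\<Sum>xs\<in>configs N. \<gamma> (perm_config \<sigma> xs)) = (\<Sum>xs\<in>configs N. \<gamma> xs)"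
      if "\<sigma> \<in> ?P" for \<sigma>
      using sum.reindex_bij_betw[OF bij_perm_config[of \<sigma> N], of \<gamma>] that by simp
    show ?thesis using inner by (auto intro!: sum.cong)
  qed
  finally show ?thesis by (simp add: sum_perms_const card_perms)
qed



lemma ereal_sum_left:
  assumes "\<And>i. i \<in> A \<Longrightarrow> a i \<ge> 0"
  shows "ereal (\<Sum>i\<in>A. a i) * x = (\<Sum>i\<in>A. ereal (a i) * x)"
  using assms
proof (induction A rule: infinite_finite_induct)
  case (insert i A)
  have "ereal (\<Sum>i\<in>insert i A. a i) * x = (ereal (a i) + ereal (\<Sum>i\<in>A. a i)) * x"
    using insert by simp
  also have "\<dots> = ereal (a i) * x + ereal (\<Sum>i\<in>A. a i) * x"
    using insert by (intro ereal_left_distrib) (auto intro!: sum_nonneg)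
  finally show ?case using insert by simp
qed auto

lemma ereal_sum_right:
  assumes "r \<ge> 0"
  shows "ereal r * sum f A = (\<Sum>i\<in>A. ereal r * f i)"
  using sum_distrib_right_ereal[OF assms, of f A] by (simp add: mult.commute)

lemma count_list_card: "count_list ys a = card {k. k < length ys \<and> ys ! k = a}"
  by (simp add: count_list_eq_length_filter length_filter_conv_card eq_commute)

lemma sum_count_list: "(\<Sum>a\<in>UNIV. count_list ys a) = length (ys :: 'a::finite list)"
proof (induction ys)
  case (Cons x ys)
  have "(\<Sum>a\<in>UNIV. count_list (x # ys) a) = (\<Sum>a\<in>UNIV. count_list ys a + (if x = a then 1 else 0))"
    by (intro sum.cong) auto
  also have "\<dots> = (\<Sum>a\<in>UNIV. count_list ys a) + 1"
    by (simp add: sum.distrib)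
  finally show ?case using Cons by simp
qed simp

definition ev :: "nat \<Rightarrow> 'a list \<Rightarrow> 'a \<Rightarrow> real" where
  "ev N ys a = real (count_list ys a) / real N"

lemma ev_nonneg: "ev N ys a \<ge> 0" by (simp add: ev_def)

lemma sum_ev: "length ys = N \<Longrightarrow> N \<ge> 1 \<Longrightarrow> (\<Sum>a\<in>UNIV. ev N (ys::'a::finite list) a) = 1"
  unfolding ev_def sum_divide_distrib[symmetric]
  using sum_count_list[of ys] by (simp flip: of_nat_sum)

lemma sum_perm_first:
  fixes f :: "nat \<Rightarrow> real"
  assumes "N \<ge> 1"
  shows "(\<Sum>\<sigma>\<in>{\<sigma>. \<sigma> permutes {0..<N}}. f (\<sigma> 0)) = fact (N - 1) * (\<Sum>b<N. f b)"
proof -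
  have eq: "{0..<N} = insert 0 {1..<N}" using assms by auto
  have "(\<Sum>\<sigma>\<in>{\<sigma>. \<sigma> permutes {0..<N}}. f (\<sigma> 0)) =
     (\<Sum>b\<in>insert 0 {1..<N}. \<Sum>q\<in>{q. q permutes {1..<N}}. f ((Transposition.transpose 0 b \<circ> q) 0))"
    unfolding eq by (rule sum_over_permutations_insert) auto
  also have "\<dots> = (\<Sum>b\<in>insert 0 {1..<N}. \<Sum>q\<in>{q. q permutes {1..<N}}. f b)"
    by (intro sum.cong refl) (auto simp: permutes_not_in)
  also have "\<dots> = (\<Sum>b\<in>insert 0 {1..<N}. fact (N - 1) * f b)"
    by (simp add: card_permutations)
  also have "\<dots> = fact (N - 1) * (\<Sum>b<N. f b)"
  proof -
    have eq2: "insert 0 {1..<N} = {..<N}" using assms by auto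
    show ?thesis unfolding eq2 by (simp add: sum_distrib_left)
  qed
  finally show ?thesis .
qed

lemma marg_Dc:
  assumes ys: "length ys = N" and N: "N \<ge> 1"
  shows "marg N 0 (Dc N ys) a = ev N ys a"
proof -
  let ?P = "{\<sigma>. \<sigma> permutes {0..<N}}"
  let ?C = "{xs\<in>configs N. xs ! 0 = a}"
  have "marg N 0 (Dc N ys) a = (\<Sum>xs\<in>?C. \<Sum>\<sigma>\<in>?P. if xs = perm_config (inv \<sigma>) ys then 1 / fact N else 0)"
    unfolding marg_def by (intro sum.cong refl) (auto simp: Dc_alt[OF ys])
  also have "\<dots> = (\<Sum>\<sigma>\<in>?P. \<Sum>xs\<in>?C. if xs = perm_config (inv \<sigma>) ys then 1 / fact N else 0)"
    by (rule sum.swap)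
  also have "\<dots> = (\<Sum>\<sigma>\<in>?P. if ys ! (inv \<sigma> 0) = a then 1 / fact N else 0)"
  proof (intro sum.cong refl)
    fix \<sigma> assume s: "\<sigma> \<in> ?P"
    have "(\<Sum>xs\<in>?C. if xs = perm_config (inv \<sigma>) ys then 1 / fact N else (0::real)) =
        (if perm_config (inv \<sigma>) ys \<in> ?C then 1 / fact N else 0)"
      by (rule sum.delta) (rule finite_subset[OF _ finite_configs[of N]], auto)
    also have "\<dots> = (if ys ! (inv \<sigma> 0) = a then 1 / fact N else 0)"
      using ys N by (simp add: nth_perm_config)
    finally show "(\<Sum>xs\<in>?C. if xs = perm_config (inv \<sigma>) ys then 1 / fact N else (0::real)) =
        (if ys ! (inv \<sigma> 0) = a then 1 / fact N else 0)" .
  qed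
  also have "\<dots> = (\<Sum>\<sigma>\<in>?P. if ys ! (\<sigma> 0) = a then 1 / fact N else 0)"
    by (rule sum_permutations_inverse[symmetric, where f="\<lambda>\<sigma>. if ys ! (\<sigma> 0) = a then 1 / fact N else (0::real)"])
  also have "\<dots> = fact (N - 1) * (\<Sum>b<N. if ys ! b = a then 1 / fact N else 0)"
    by (rule sum_perm_first[OF N, where f="\<lambda>b. if ys ! b = a then 1 / fact N else (0::real)"])
  also have "\<dots> = fact (N - 1) * (1 / fact N * real (card {b. b < N \<and> ys ! b = a}))"
  proof -
    have "(\<Sum>b<N. if ys ! b = a then 1 / fact N else (0::real)) = (\<Sum>b\<in>{b\<in>{..<N}. ys ! b = a}. 1 / fact N)"
      by (rule sum.inter_filter[symmetric]) simp
    also have "{b\<in>{..<N}. ys ! b = a} = {b. b < N \<and> ys ! b = a}" by auto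
    finally show ?thesis by simp
  qed
  also have "fact N = real N * (fact (N - 1) :: real)"
    using N by (subst fact_reduce) auto
  finally show ?thesis using ys N by (simp add: ev_def count_list_card)
qed

lemma sum_Dc:
  fixes ys :: "'a::finite list"
  assumes "length ys = N"
  shows "(\<Sum>xs\<in>configs N. Dc N ys xs) = 1"
  using assms by (simp add: Dc_def sum_symmetrize dirac_cfg_def sum.delta)

lemma cost_Dc:
  assumes ys: "length ys = N"
  shows "cost N cN (Dc N ys) = (\<Sum>\<sigma>\<in>{\<sigma>. \<sigma> permutes {0..<N}}. ereal (1 / fact N) * cN (perm_config \<sigma> ys))"
proof -
  let ?P = "{\<sigma>. \<sigma> permutes {0..<N}}"
  have "cost N cN (Dc N ys) = (\<Sum>xs\<in>configs N. \<Sum>\<sigma>\<in>?P. ereal (if xs = perm_config (inv \<sigma>) ys then 1 / fact N else 0) * cN xs)"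
    unfolding cost_def
    by (intro sum.cong refl, subst Dc_alt[OF ys]) (auto intro!: ereal_sum_left)
  also have "\<dots> = (\<Sum>\<sigma>\<in>?P. \<Sum>xs\<in>configs N. if xs = perm_config (inv \<sigma>) ys then ereal (1 / fact N) * cN xs else 0)"
    by (subst sum.swap) (intro sum.cong refl, auto)
  also have "\<dots> = (\<Sum>\<sigma>\<in>?P. ereal (1 / fact N) * cN (perm_config (inv \<sigma>) ys))"
    by (intro sum.cong refl, subst sum.delta) (auto simp: ys)
  also have "\<dots> = (\<Sum>\<sigma>\<in>?P. ereal (1 / fact N) * cN (perm_config \<sigma> ys))"
    by (rule sum_permutations_inverse[symmetric, where f="\<lambda>\<sigma>. ereal (1 / fact N) * cN (perm_config \<sigma> ys)"])
  finally show ?thesis .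
qed



lemma cost_lin:
  fixes g :: "'i \<Rightarrow> 'a::finite list \<Rightarrow> real"
  assumes "\<And>i. i \<in> I \<Longrightarrow> \<alpha> i \<ge> 0" "\<And>i xs. g i xs \<ge> 0"
  shows "cost N cN (\<lambda>xs. \<Sum>i\<in>I. \<alpha> i * g i xs) = (\<Sum>i\<in>I. ereal (\<alpha> i) * cost N cN (g i))"
proof -
  have "cost N cN (\<lambda>xs. \<Sum>i\<in>I. \<alpha> i * g i xs) = (\<Sum>xs\<in>configs N. \<Sum>i\<in>I. ereal (\<alpha> i * g i xs) * cN xs)"
    unfolding cost_def using assms by (intro sum.cong refl ereal_sum_left) auto
  also have "\<dots> = (\<Sum>i\<in>I. \<Sum>xs\<in>configs N. ereal (\<alpha> i) * (ereal (g i xs) * cN xs))"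
    by (subst sum.swap) (simp add: mult.assoc[symmetric])
  also have "\<dots> = (\<Sum>i\<in>I. ereal (\<alpha> i) * cost N cN (g i))"
    unfolding cost_def using assms by (intro sum.cong refl ereal_sum_right[symmetric]) auto
  finally show ?thesis .
qed

lemma marg_lin:
  "marg N k (\<lambda>xs. \<Sum>i\<in>I. \<alpha> i * g i xs) a = (\<Sum>i\<in>I. \<alpha> i * marg N k (g i) a)"
  unfolding marg_def by (simp add: sum_distrib_left sum.swap[of _ I])

lemma Dc_zero: "length xs \<noteq> N \<Longrightarrow> Dc N ys xs = 0"
  by (simp add: Dc_def symmetrize_def)

lemma symmetrize_Dc: "symmetrize N (Dc N ys) = Dc N ys"
  by (simp add: Dc_def symmetrize_idem)

lemma kant_adm_comb:
  fixes ys :: "'i \<Rightarrow> 'a::finite list"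
  assumes I: "finite I" and al: "\<And>i. i \<in> I \<Longrightarrow> \<alpha> i \<ge> 0"
    and ys: "\<And>i. i \<in> I \<Longrightarrow> length (ys i) = N" and N: "N \<ge> 1"
    and lam: "\<And>a. (\<Sum>i\<in>I. \<alpha> i * ev N (ys i) a) = lam a" and lp: "is_prob lam"
  shows "kant_adm N lam (\<lambda>xs. \<Sum>i\<in>I. \<alpha> i * Dc N (ys i) xs)"
proof -
  let ?g = "\<lambda>xs. \<Sum>i\<in>I. \<alpha> i * Dc N (ys i) xs"
  have sa: "(\<Sum>i\<in>I. \<alpha> i) = 1"
  proof -
    have "(\<Sum>i\<in>I. \<alpha> i) = (\<Sum>i\<in>I. \<alpha> i * (\<Sum>a\<in>UNIV. ev N (ys i) a))"
      using ys N by (simp add: sum_ev)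
    also have "\<dots> = (\<Sum>a\<in>UNIV. lam a)"
      by (simp add: sum_distrib_left sum.swap[of _ I] lam[symmetric])
    finally show ?thesis using lp by (simp add: is_prob_def)
  qed
  have "is_prob_N N ?g"
    unfolding is_prob_N_def
  proof (intro conjI allI impI)
    fix xs show "?g xs \<ge> 0" using al by (auto intro!: sum_nonneg mult_nonneg_nonneg Dc_nonneg)
  next
    fix xs :: "'a list" assume "length xs \<noteq> N" then show "?g xs = 0" by (simp add: Dc_zero)
  next
    have "(\<Sum>xs\<in>configs N. ?g xs) = (\<Sum>i\<in>I. \<alpha> i * (\<Sum>xs\<in>configs N. Dc N (ys i) xs))"
      by (simp add: sum_distrib_left sum.swap[of _ I])
    also have "\<dots> = (\<Sum>i\<in>I. \<alpha> i)" using ys by (simp add: sum_Dc)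
    finally show "(\<Sum>xs\<in>configs N. ?g xs) = 1" using sa by simp
  qed
  moreover have "symmetrize N ?g = ?g"
    by (simp add: symmetrize_lin symmetrize_Dc)
  moreover have "marg N 0 ?g = lam"
    using ys N by (auto simp: marg_lin marg_Dc lam)
  ultimately show ?thesis by (simp add: kant_adm_def sym_prob_def)
qed

lemma kant_adm_decomp:
  fixes \<gamma> :: "'a::finite list \<Rightarrow> real"
  assumes "kant_adm N lam \<gamma>" "N \<ge> 1"
  shows "\<gamma> = (\<lambda>xs. \<Sum>ys\<in>configs N. \<gamma> ys * Dc N ys xs)"
    and "\<And>a. (\<Sum>ys\<in>configs N. \<gamma> ys * ev N ys a) = lam a"
    and "\<And>ys. \<gamma> ys \<ge> 0" and "\<And>ys. length ys \<noteq> N \<Longrightarrow> \<gamma> ys = 0"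
proof -
  have sym: "symmetrize N \<gamma> = \<gamma>" and pr: "is_prob_N N \<gamma>" and m: "marg N 0 \<gamma> = lam"
    using assms by (auto simp: kant_adm_def sym_prob_def)
  show dec: "\<gamma> = (\<lambda>xs. \<Sum>ys\<in>configs N. \<gamma> ys * Dc N ys xs)"
    using symmetrize_decomp[of N \<gamma>] sym by simp
  fix a
  have "lam a = marg N 0 (\<lambda>xs. \<Sum>ys\<in>configs N. \<gamma> ys * Dc N ys xs) a"
    using m dec by simp
  also have "\<dots> = (\<Sum>ys\<in>configs N. \<gamma> ys * ev N ys a)"
    using assms(2) by (simp add: marg_lin marg_Dc)
  finally show "(\<Sum>ys\<in>configs N. \<gamma> ys * ev N ys a) = lam a" by simp
next
  show "\<And>ys. \<gamma> ys \<ge> 0" "\<And>ys. length ys \<noteq> N \<Longrightarrow> \<gamma> ys = 0"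
    using assms by (auto simp: kant_adm_def sym_prob_def is_prob_N_def)
qed



definition Pw :: "nat \<Rightarrow> ('a::finite \<Rightarrow> real) \<Rightarrow> ('a list \<Rightarrow> real) \<Rightarrow> bool" where
  "Pw N lam w \<longleftrightarrow> (\<forall>ys. w ys \<ge> 0) \<and> (\<forall>ys. length ys \<noteq> N \<longrightarrow> w ys = 0) \<and>
     (\<forall>a. (\<Sum>ys\<in>configs N. w ys * ev N ys a) = lam a)"

definition FK :: "nat \<Rightarrow> ('a::finite list \<Rightarrow> ereal) \<Rightarrow> ('a list \<Rightarrow> real) \<Rightarrow> ereal" where
  "FK N K w = (\<Sum>ys\<in>configs N. ereal (w ys) * K ys)"

definition supp :: "nat \<Rightarrow> ('a list \<Rightarrow> real) \<Rightarrow> 'a list set" where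
  "supp N w = {ys\<in>configs N. w ys \<noteq> 0}"

definition indep :: "nat \<Rightarrow> 'a::finite list set \<Rightarrow> bool" where
  "indep N S \<longleftrightarrow> (\<forall>d. (\<forall>a. (\<Sum>ys\<in>S. d ys * ev N ys a) = 0) \<longrightarrow> (\<forall>ys\<in>S. d ys = 0))"

lemma finite_supp[simp]: "finite (supp N (w :: 'a::finite list \<Rightarrow> real))"
  by (rule finite_subset[OF _ finite_configs[of N]]) (auto simp: supp_def)

lemma supp_sub: "supp N w \<subseteq> configs N" by (auto simp: supp_def)

lemma outside_supp: "Pw N lam w \<Longrightarrow> ys \<notin> supp N w \<Longrightarrow> w ys = 0"
  by (cases "length ys = N") (auto simp: Pw_def supp_def)

lemma sum_on_supp:
  fixes w :: "'a::finite list \<Rightarrow> real"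
  assumes "Pw N lam w" "supp N w \<subseteq> S" "S \<subseteq> configs N" "\<And>ys. f 0 ys = 0"
  shows "(\<Sum>ys\<in>configs N. f (w ys) ys) = (\<Sum>ys\<in>S. f (w ys) ys)"
proof -
  have "(\<Sum>ys\<in>S. f (w ys) ys) = (\<Sum>ys\<in>configs N. f (w ys) ys)"
  proof (rule sum.mono_neutral_left)
    show "\<forall>i\<in>configs N - S. f (w i) i = 0"
    proof
      fix i assume "i \<in> configs N - S"
      then have "i \<notin> supp N w" using assms(2) by auto
      then show "f (w i) i = 0" using outside_supp[OF assms(1)] assms(4) by simp
    qed
  qed (use assms(3) in auto)
  then show ?thesis by simp
qed

lemma FK_supp:
  fixes w :: "'a::finite list \<Rightarrow> real"
  assumes "Pw N lam w" "supp N w \<subseteq> S" "S \<subseteq> configs N"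
  shows "FK N K w = (\<Sum>ys\<in>S. ereal (w ys) * K ys)"
  unfolding FK_def using sum_on_supp[OF assms, of "\<lambda>x ys. ereal x * K ys"] by (simp add: zero_ereal_def[symmetric])

lemma step:
  fixes w :: "'a::finite list \<Rightarrow> real"
  assumes w: "Pw N lam w" and S: "S = supp N w"
    and dz: "\<And>ys. ys \<notin> S \<Longrightarrow> d ys = 0"
    and dl: "\<And>a. (\<Sum>ys\<in>S. d ys * ev N ys a) = 0"
    and y1: "y1 \<in> S" "d y1 < 0"
    and Kc: "(\<exists>ys\<in>S. K ys = \<infinity>) \<or> (\<Sum>ys\<in>S. d ys * real_of_ereal (K ys)) \<le> 0"
    and Km: "\<And>ys. K ys \<noteq> -\<infinity>"
  shows "\<exists>w'. Pw N lam w' \<and> supp N w' \<subset> S \<and> FK N K w' \<le> FK N K w"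
proof -
  define Neg where "Neg = {ys\<in>S. d ys < 0}"
  define r where "r ys = w ys / (- d ys)" for ys
  define t where "t = Min (r ` Neg)"
  have finS: "finite S" using S by simp
  have finN: "finite Neg" "Neg \<noteq> {}" using y1 finS by (auto simp: Neg_def)
  have "Min (r ` Neg) \<in> r ` Neg" using finN by (intro Min_in) auto
  then obtain ym where ym: "ym \<in> Neg" "t = r ym" by (auto simp: t_def)
  have tle: "t \<le> r ys" if "ys \<in> Neg" for ys using that finN by (auto simp: t_def)
  have wpos: "w ys > 0" if "ys \<in> S" for ys
    using that w S by (auto simp: supp_def Pw_def order.order_iff_strict)
  have w0: "w ys \<ge> 0" for ys using w by (auto simp: Pw_def)
  have t0: "t > 0"
  proof -
    have "w ym > 0" "- d ym > 0" using ym wpos by (auto simp: Neg_def)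
    then show ?thesis using ym(2) unfolding r_def by (simp only: divide_pos_pos)
  qed
  define w' where "w' ys = w ys + t * d ys" for ys
  have SC: "S \<subseteq> configs N" using S supp_sub by blast
  have "Pw N lam w'"
    unfolding Pw_def
  proof (intro conjI allI impI)
    fix ys
    show "w' ys \<ge> 0"
    proof (cases "d ys < 0")
      case True
      then have "ys \<in> Neg" using dz by (force simp: Neg_def)
      then have h: "t \<le> w ys / (- d ys)" using tle unfolding r_def by blast
      have "t * (- d ys) \<le> w ys"
        by (rule pos_le_divide_eq[THEN iffD1, OF _ h]) (use True in simp)
      then show ?thesis by (simp add: w'_def algebra_simps)
    next
      case False then show ?thesis using t0 w0[of ys] by (simp add: w'_def)
    qed
  next
    fix ys :: "'a list" assume "length ys \<noteq> N"
    then have "ys \<notin> S" using SC by auto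
    then show "w' ys = 0" using dz outside_supp[OF w, of ys] S by (simp add: w'_def)
  next
    fix a
    have "(\<Sum>ys\<in>S. d ys * ev N ys a) = (\<Sum>ys\<in>configs N. d ys * ev N ys a)"
      by (rule sum.mono_neutral_left) (use SC dz in auto)
    then have "(\<Sum>ys\<in>configs N. d ys * ev N ys a) = (\<Sum>ys\<in>S. d ys * ev N ys a)" by simp
    then have "(\<Sum>ys\<in>configs N. w' ys * ev N ys a) = (\<Sum>ys\<in>configs N. w ys * ev N ys a)"
      using dl by (simp add: w'_def algebra_simps sum.distrib sum_distrib_left[symmetric])
    then show "(\<Sum>ys\<in>configs N. w' ys * ev N ys a) = lam a" using w by (simp add: Pw_def)
  qed
  moreover have sub: "supp N w' \<subseteq> S"
  proof
    fix ys assume "ys \<in> supp N w'"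
    then show "ys \<in> S" using dz outside_supp[OF w, of ys] S by (auto simp: supp_def w'_def)
  qed
  moreover have "supp N w' \<noteq> S"
  proof -
    have "ym \<in> S" "d ym < 0" using ym by (auto simp: Neg_def)
    then have "w' ym = 0" using ym by (simp add: w'_def r_def)
    then show ?thesis using \<open>ym \<in> S\<close> by (auto simp: supp_def)
  qed
  moreover have "FK N K w' \<le> FK N K w"
  proof (cases "\<exists>ys\<in>S. K ys = \<infinity>")
    case True
    then obtain yi where yi: "yi \<in> S" "K yi = \<infinity>" by blast
    have "FK N K w = (\<Sum>ys\<in>S. ereal (w ys) * K ys)"
      using FK_supp[OF w _ SC] S by simp
    also have "\<dots> = \<infinity>"
      using yi wpos[OF yi(1)] finS by (subst sum_Pinfty) auto
    finally show ?thesis by simp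
  next
    case False
    then have neg: "(\<Sum>ys\<in>S. d ys * real_of_ereal (K ys)) \<le> 0" using Kc by blast
    have Kr: "K ys = ereal (real_of_ereal (K ys))" if "ys \<in> S" for ys
      using False that Km[of ys] by (cases "K ys") auto
    have eq: "FK N K v = ereal (\<Sum>ys\<in>S. v ys * real_of_ereal (K ys))"
      if "Pw N lam v" "supp N v \<subseteq> S" for v
    proof -
      have "FK N K v = (\<Sum>ys\<in>S. ereal (v ys) * K ys)" by (rule FK_supp[OF that SC])
      also have "\<dots> = (\<Sum>ys\<in>S. ereal (v ys * real_of_ereal (K ys)))"
        by (intro sum.cong refl) (subst Kr, auto)
      finally show ?thesis by simp
    qed
    have "(\<Sum>ys\<in>S. w' ys * real_of_ereal (K ys)) =
          (\<Sum>ys\<in>S. w ys * real_of_ereal (K ys)) + t * (\<Sum>ys\<in>S. d ys * real_of_ereal (K ys))"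
      by (simp add: w'_def algebra_simps sum.distrib sum_distrib_left)
    also have "\<dots> \<le> (\<Sum>ys\<in>S. w ys * real_of_ereal (K ys))"
      using t0 neg by (simp add: mult_nonneg_nonpos)
    finally show ?thesis
      using eq[OF \<open>Pw N lam w'\<close> sub] eq[OF w] S by simp
  qed
  ultimately show ?thesis by blast
qed



lemma count_list_replicate: "count_list (replicate n x) y = (if x = y then n else 0)"
  by (induction n) auto

lemma sign_split:
  fixes d :: "'b \<Rightarrow> real"
  assumes fin: "finite S" and s0: "(\<Sum>y\<in>S. d y) = 0" and y0: "y0 \<in> S" "d y0 \<noteq> 0"
  shows "\<exists>y\<in>S. d y < 0" "\<exists>y\<in>S. d y > 0"
proof -
  show "\<exists>y\<in>S. d y < 0"
  proof (rule ccontr)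
    assume "\<not> ?thesis"
    then have nn: "\<And>y. y \<in> S \<Longrightarrow> d y \<ge> 0" by (simp add: not_less)
    have "d y0 = 0" using sum_nonneg_eq_0_iff[OF fin, of d] nn s0 y0(1) by simp
    then show False using y0(2) by simp
  qed
  show "\<exists>y\<in>S. d y > 0"
  proof (rule ccontr)
    assume "\<not> ?thesis"
    then have nn: "\<And>y. y \<in> S \<Longrightarrow> - d y \<ge> 0" by (simp add: not_less)
    have s1: "(\<Sum>y\<in>S. - d y) = 0" using s0 by (simp add: sum_negf)
    have "- d y0 = 0" using sum_nonneg_eq_0_iff[OF fin, of "\<lambda>y. - d y"] nn s1 y0(1) by simp
    then show False using y0(2) by simp
  qed
qed

lemma reduce:
  fixes w :: "'a::finite list \<Rightarrow> real"
  assumes N: "N \<ge> 1" and Km: "\<And>ys. K ys \<noteq> -\<infinity>"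
  shows "Pw N lam w \<Longrightarrow> \<exists>w'. Pw N lam w' \<and> indep N (supp N w') \<and> FK N K w' \<le> FK N K w"
proof (induction "card (supp N w)" arbitrary: w rule: less_induct)
  case less
  show ?case
  proof (cases "indep N (supp N w)")
    case True then show ?thesis using less.prems by blast
  next
    case False
    let ?S = "supp N w"
    from False obtain d0 y0 where d0: "\<And>a. (\<Sum>ys\<in>?S. d0 ys * ev N ys a) = 0"
      and y0: "y0 \<in> ?S" "d0 y0 \<noteq> 0" unfolding indep_def by blast
    have sum0: "(\<Sum>ys\<in>?S. d0 ys) = 0"
    proof -
      have "(\<Sum>ys\<in>?S. d0 ys) = (\<Sum>ys\<in>?S. d0 ys * (\<Sum>a\<in>UNIV. ev N ys a))"
        using N by (intro sum.cong refl) (auto simp: sum_ev supp_def)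
      also have "\<dots> = (\<Sum>a\<in>UNIV. \<Sum>ys\<in>?S. d0 ys * ev N ys a)"
        by (simp add: sum_distrib_left sum.swap[of _ ?S])
      finally show ?thesis using d0 by simp
    qed
    note sg = sign_split[OF finite_supp sum0 y0]
    define R where "R = (\<Sum>ys\<in>?S. d0 ys * real_of_ereal (K ys))"
    define s where "s = (if R \<le> 0 then 1 else -1 :: real)"
    define d where "d ys = (if ys \<in> ?S then s * d0 ys else 0)" for ys
    have dz: "\<And>ys. ys \<notin> ?S \<Longrightarrow> d ys = 0" by (simp add: d_def)
    have dl: "\<And>a. (\<Sum>ys\<in>?S. d ys * ev N ys a) = 0"
    proof -
      fix a
      have "(\<Sum>ys\<in>?S. d ys * ev N ys a) = s * (\<Sum>ys\<in>?S. d0 ys * ev N ys a)"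
        by (simp add: d_def sum_distrib_left mult.assoc)
      then show "(\<Sum>ys\<in>?S. d ys * ev N ys a) = 0" using d0 by simp
    qed
    obtain y1 where y1: "y1 \<in> ?S" "d y1 < 0"
    proof (cases "R \<le> 0")
      case True
      then obtain y where "y \<in> ?S" "d0 y < 0" using sg by blast
      then show ?thesis using that True by (auto simp: d_def s_def)
    next
      case False
      then obtain y where "y \<in> ?S" "d0 y > 0" using sg by blast
      then show ?thesis using that False by (auto simp: d_def s_def)
    qed
    have "(\<Sum>ys\<in>?S. d ys * real_of_ereal (K ys)) = s * R"
      by (simp add: d_def R_def sum_distrib_left mult.assoc)
    also have "\<dots> \<le> 0" by (simp add: s_def)
    finally have Kc: "(\<exists>ys\<in>?S. K ys = \<infinity>) \<or> (\<Sum>ys\<in>?S. d ys * real_of_ereal (K ys)) \<le> 0" by blast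
    obtain w' where w': "Pw N lam w'" "supp N w' \<subset> ?S" "FK N K w' \<le> FK N K w"
      using step[OF less.prems refl dz dl y1 Kc Km] by blast
    have "card (supp N w') < card ?S" using w'(2) by (simp add: psubset_card_mono)
    from less.hyps[OF this w'(1)] obtain w'' where
      "Pw N lam w''" "indep N (supp N w'')" "FK N K w'' \<le> FK N K w'" by blast
    then show ?thesis using w'(3) by (meson order.trans)
  qed
qed

lemma basic_unique:
  fixes w1 w2 :: "'a::finite list \<Rightarrow> real"
  assumes w1: "Pw N lam w1" and w2: "Pw N lam w2" and eq: "supp N w1 = supp N w2"
    and ind: "indep N (supp N w1)"
  shows "w1 = w2"
proof -
  let ?S = "supp N w1"
  have s: "(\<Sum>ys\<in>?S. w ys * ev N ys a) = lam a" if "Pw N lam w" "supp N w = ?S" for w a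
  proof -
    have "(\<Sum>ys\<in>configs N. w ys * ev N ys a) = (\<Sum>ys\<in>?S. w ys * ev N ys a)"
      by (rule sum_on_supp[OF that(1), of ?S "\<lambda>x ys. x * ev N ys a"]) (use that(2) supp_sub in auto)
    then show ?thesis using that(1) by (simp add: Pw_def)
  qed
  have "\<forall>ys\<in>?S. w1 ys - w2 ys = 0"
    using ind unfolding indep_def
  proof (elim allE impE)
    show "\<forall>a. (\<Sum>ys\<in>?S. (w1 ys - w2 ys) * ev N ys a) = 0"
      using s[OF w1 refl] s[OF w2 eq[symmetric]] by (simp add: algebra_simps sum_subtractf)
  qed
  moreover have "w1 ys = w2 ys" if "ys \<notin> ?S" for ys
    using outside_supp[OF w1 that] outside_supp[OF w2] that eq by simp
  ultimately show ?thesis by fastforce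
qed

lemma exists_opt:
  fixes lam :: "'a::finite \<Rightarrow> real"
  assumes N: "N \<ge> 1" and Km: "\<And>ys. K ys \<noteq> -\<infinity>" and lp: "is_prob lam"
  shows "\<exists>w. Pw N lam w \<and> card (supp N w) \<le> CARD('a) \<and> (\<forall>w'. Pw N lam w' \<longrightarrow> FK N K w \<le> FK N K w')"
proof -
  define B where "B = {w. Pw N lam w \<and> indep N (supp N w)}"
  have "inj_on (supp N) B"
  proof (rule inj_onI)
    fix x y assume "x \<in> B" "y \<in> B" "supp N x = supp N y"
    then show "x = y" using basic_unique[of N lam x y] by (simp add: B_def)
  qed
  then have finB: "finite B"
    by (rule inj_on_finite[where B="Pow (configs N)"]) (auto simp: supp_def)
  define w0 where "w0 ys = (\<Sum>a\<in>UNIV. if ys = replicate N a then lam a else 0)" for ys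
  have "Pw N lam w0"
    unfolding Pw_def
  proof (intro conjI allI impI)
    fix ys show "w0 ys \<ge> 0" using lp by (auto simp: w0_def is_prob_def intro!: sum_nonneg)
  next
    fix ys :: "'a list" assume "length ys \<noteq> N"
    then have "\<forall>a. ys \<noteq> replicate N a" by auto
    then show "w0 ys = 0" by (simp add: w0_def)
  next
    fix b
    have "(\<Sum>ys\<in>configs N. w0 ys * ev N ys b) =
        (\<Sum>a\<in>UNIV. \<Sum>ys\<in>configs N. if ys = replicate N a then lam a * ev N ys b else 0)"
    proof -
      have "(\<Sum>ys\<in>configs N. w0 ys * ev N ys b) =
          (\<Sum>ys\<in>configs N. \<Sum>a\<in>UNIV. if ys = replicate N a then lam a * ev N ys b else 0)"
        unfolding w0_def sum_distrib_right by (intro sum.cong refl) simp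
      then show ?thesis by (simp only: sum.swap[of _ "configs N"])
    qed
    also have "\<dots> = (\<Sum>a\<in>UNIV. lam a * ev N (replicate N a) b)"
      by (intro sum.cong refl, subst sum.delta) auto
    also have "\<dots> = (\<Sum>a\<in>UNIV. if a = b then lam a else 0)"
      using N by (intro sum.cong refl) (simp add: ev_def count_list_replicate)
    also have "\<dots> = lam b" by simp
    finally show "(\<Sum>ys\<in>configs N. w0 ys * ev N ys b) = lam b" .
  qed
  then obtain wb where "wb \<in> B" using reduce[where K=K, OF N Km \<open>Pw N lam w0\<close>] by (auto simp: B_def)
  then have ne: "FK N K ` B \<noteq> {}" by auto
  have "Min (FK N K ` B) \<in> FK N K ` B" using finB ne by (intro Min_in) auto
  then obtain wm where wm: "wm \<in> B" "FK N K wm = Min (FK N K ` B)" by auto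
  have opt: "FK N K wm \<le> FK N K w'" if hw: "Pw N lam w'" for w'
  proof -
    obtain w'' where "w'' \<in> B" "FK N K w'' \<le> FK N K w'"
      using reduce[where K=K, OF N Km hw] by (auto simp: B_def)
    moreover have "FK N K wm \<le> FK N K w''" using wm \<open>w'' \<in> B\<close> finB by simp
    ultimately show ?thesis by simp
  qed
  have "card (supp N wm) \<le> CARD('a)"
  proof (rule card_indep[where v="\<lambda>ys. \<chi> a. ev N ys a"])
    show "finite (supp N wm)" by simp
  next
    fix d :: "'a list \<Rightarrow> real"
    assume "(\<Sum>s\<in>supp N wm. d s *\<^sub>R (\<chi> a. ev N s a)) = 0"
    then have "\<forall>a. (\<Sum>s\<in>supp N wm. d s * ev N s a) = 0"
      by (simp add: vec_eq_iff)
    then show "\<forall>s\<in>supp N wm. d s = 0" using wm(1) by (auto simp: B_def indep_def)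
  qed
  then show ?thesis using wm(1) opt by (auto simp: B_def)
qed



lemma cost_not_minf:
  assumes "\<And>xs. cN xs \<noteq> -\<infinity>" "\<And>xs. \<gamma> xs \<ge> 0"
  shows "cost N cN \<gamma> \<noteq> -\<infinity>"
proof -
  have "\<And>A. finite A \<Longrightarrow> (\<Sum>xs\<in>A. ereal (\<gamma> xs) * cN xs) \<noteq> -\<infinity>"
  proof -
    fix A :: "'a list set" assume "finite A"
    then show "(\<Sum>xs\<in>A. ereal (\<gamma> xs) * cN xs) \<noteq> -\<infinity>"
    proof (induction A rule: finite_induct)
      case (insert x F)
      have "ereal (\<gamma> x) * cN x \<noteq> -\<infinity>" using assms(1)[of x] assms(2)[of x]
        by (cases "cN x") (auto simp: ereal_mult_eq_MInfty)
      then show ?case using insert by simp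
    qed simp
  qed
  then show ?thesis unfolding cost_def by simp
qed

lemma reindex_supp:
  fixes wm :: "'a::finite list \<Rightarrow> real" and g :: "real \<Rightarrow> 'a list \<Rightarrow> 'b::comm_monoid_add" and f :: "'a list \<Rightarrow> 'c::finite"
  assumes w: "Pw N lam wm" and inj: "inj_on f (supp N wm)" and g0: "\<And>ys. g 0 ys = 0"
  defines "ysf \<equiv> \<lambda>\<nu>. if \<nu> \<in> f ` supp N wm then inv_into (supp N wm) f \<nu> else replicate N undefined"
  defines "\<alpha>f \<equiv> \<lambda>\<nu>. if \<nu> \<in> f ` supp N wm then wm (inv_into (supp N wm) f \<nu>) else 0"
  shows "(\<Sum>\<nu>\<in>UNIV. g (\<alpha>f \<nu>) (ysf \<nu>)) = (\<Sum>ys\<in>configs N. g (wm ys) ys)"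
proof -
  let ?S = "supp N wm"
  have "(\<Sum>\<nu>\<in>UNIV. g (\<alpha>f \<nu>) (ysf \<nu>)) = (\<Sum>\<nu>\<in>f ` ?S. g (\<alpha>f \<nu>) (ysf \<nu>))"
    by (rule sum.mono_neutral_right) (auto simp: \<alpha>f_def g0)
  also have "\<dots> = (\<Sum>y\<in>?S. g (\<alpha>f (f y)) (ysf (f y)))"
    by (rule sum.reindex[OF inj, unfolded comp_def])
  also have "\<dots> = (\<Sum>y\<in>?S. g (wm y) y)"
    by (intro sum.cong refl) (auto simp: \<alpha>f_def ysf_def inv_into_f_f[OF inj])
  also have "\<dots> = (\<Sum>ys\<in>configs N. g (wm ys) ys)"
    by (rule sum_on_supp[OF w order.refl supp_sub, symmetric]) (rule g0)
  finally show ?thesis .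
qed

lemma part_a:
  fixes lam :: "'a::finite \<Rightarrow> real"
  assumes N: "N \<ge> 1" and cm: "\<And>xs. cN xs \<noteq> -\<infinity>" and lp: "is_prob lam"
  shows "\<exists>(\<alpha>::'a \<Rightarrow> real) ys. (\<forall>\<nu>. \<alpha> \<nu> \<ge> 0) \<and> (\<forall>\<nu>. length (ys \<nu>) = N) \<and>
     (\<forall>a. (\<Sum>\<nu>\<in>UNIV. \<alpha> \<nu> * ev N (ys \<nu>) a) = lam a) \<and>
     kant_min N cN lam (\<lambda>xs. \<Sum>\<nu>\<in>UNIV. \<alpha> \<nu> * Dc N (ys \<nu>) xs)"
proof -
  define K where "K ys = cost N cN (Dc N ys)" for ys
  have Km: "\<And>ys. K ys \<noteq> -\<infinity>"
  proof -
    fix ys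
    show "K ys \<noteq> -\<infinity>" unfolding K_def
      by (rule cost_not_minf) (rule cm, rule Dc_nonneg)
  qed
  have "\<exists>w. Pw N lam w \<and> card (supp N w) \<le> CARD('a) \<and> (\<forall>w'. Pw N lam w' \<longrightarrow> FK N K w \<le> FK N K w')"
    by (rule exists_opt[where K=K, OF N Km lp])
  then obtain wm where wm: "Pw N lam wm" "card (supp N wm) \<le> CARD('a)"
    and opt: "\<And>w'. Pw N lam w' \<Longrightarrow> FK N K wm \<le> FK N K w'"
    by blast
  let ?S = "supp N wm"
  have "\<exists>f. f ` ?S \<subseteq> (UNIV :: 'a set) \<and> inj_on f ?S"
    by (rule card_le_inj) (use wm(2) in simp_all)
  then obtain f :: "'a list \<Rightarrow> 'a" where inj: "inj_on f ?S" by blast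
  define ysf where "ysf \<equiv> \<lambda>\<nu>. if \<nu> \<in> f ` ?S then inv_into ?S f \<nu> else replicate N undefined"
  define \<alpha>f where "\<alpha>f \<equiv> \<lambda>\<nu>. if \<nu> \<in> f ` ?S then wm (inv_into ?S f \<nu>) else 0"
  note RI = reindex_supp[OF wm(1) inj]
  have w0: "wm ys \<ge> 0" for ys using wm(1) by (simp add: Pw_def)
  have a0: "\<alpha>f \<nu> \<ge> 0" for \<nu> by (simp add: \<alpha>f_def w0)
  have yl: "length (ysf \<nu>) = N" for \<nu>
  proof (cases "\<nu> \<in> f ` ?S")
    case True
    then have "inv_into ?S f \<nu> \<in> ?S" by (auto simp: inv_into_into)
    then show ?thesis using True by (auto simp: ysf_def supp_def)
  qed (simp add: ysf_def)
  have lamf: "(\<Sum>\<nu>\<in>UNIV. \<alpha>f \<nu> * ev N (ysf \<nu>) a) = lam a" for a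
    using RI[of "\<lambda>x ys. x * ev N ys a"] wm(1) by (simp add: Pw_def ysf_def \<alpha>f_def)
  let ?g = "\<lambda>xs. \<Sum>\<nu>\<in>UNIV. \<alpha>f \<nu> * Dc N (ysf \<nu>) xs"
  have adm: "kant_adm N lam ?g"
    by (rule kant_adm_comb) (use N in \<open>simp_all add: a0 yl lamf lp\<close>)
  have costg: "cost N cN ?g = FK N K wm"
  proof -
    have "cost N cN ?g = (\<Sum>\<nu>\<in>UNIV. ereal (\<alpha>f \<nu>) * K (ysf \<nu>))"
      unfolding K_def by (rule cost_lin) (auto simp: a0 Dc_nonneg)
    also have "\<dots> = FK N K wm"
      unfolding FK_def ysf_def \<alpha>f_def by (rule RI) (simp add: zero_ereal_def[symmetric])
    finally show ?thesis .
  qed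
  have "cost N cN ?g \<le> cost N cN \<gamma>'" if "kant_adm N lam \<gamma>'" for \<gamma>'
  proof -
    note dec = kant_adm_decomp[OF that N]
    have "Pw N lam \<gamma>'" using dec(2-4) by (simp add: Pw_def)
    then have "FK N K wm \<le> FK N K \<gamma>'" by (rule opt)
    also have "FK N K \<gamma>' = cost N cN \<gamma>'"
    proof -
      have "cost N cN \<gamma>' = cost N cN (\<lambda>xs. \<Sum>ys\<in>configs N. \<gamma>' ys * Dc N ys xs)"
        by (rule arg_cong[where f="cost N cN"]) (rule dec(1))
      also have "\<dots> = FK N K \<gamma>'"
        unfolding FK_def K_def by (rule cost_lin) (auto simp: dec(3) Dc_nonneg)
      finally show ?thesis by simp
    qed
    finally show ?thesis using costg by simp
  qed
  then have "kant_min N cN lam ?g" using adm by (simp add: kant_min_def)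
  then show ?thesis
    by (intro exI[of _ \<alpha>f] exI[of _ ysf]) (simp add: a0 yl lamf)
qed



lemma cost_Dc_sym:
  assumes ys: "length ys = N"
    and symc: "\<forall>\<sigma> xs. \<sigma> permutes {0..<N} \<and> length xs = N \<longrightarrow> cN (perm_config \<sigma> xs) = cN xs"
  shows "cost N cN (Dc N ys) = cN ys"
proof -
  have "cost N cN (Dc N ys) = (\<Sum>\<sigma>\<in>{\<sigma>. \<sigma> permutes {0..<N}}. ereal (1 / fact N) * cN ys)"
    unfolding cost_Dc[OF ys] using symc ys by (intro sum.cong refl) auto
  also have "\<dots> = ereal (\<Sum>\<sigma>\<in>{\<sigma>. \<sigma> permutes {0..<N}}. 1 / fact N) * cN ys"
    by (rule ereal_sum_left[symmetric]) simp
  also have "\<dots> = cN ys" by (simp add: card_perms)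
  finally show ?thesis .
qed

lemma sym_part:
  fixes \<gamma> :: "'a::finite list \<Rightarrow> real"
  assumes N: "N \<ge> 1" and pr: "is_prob_N N \<gamma>" and mg: "\<forall>k<N. marg N k \<gamma> = lam" and lp: "is_prob lam"
  shows "kant_adm N lam (symmetrize N \<gamma>)"
    and "(\<forall>\<sigma> xs. \<sigma> permutes {0..<N} \<and> length xs = N \<longrightarrow> cN (perm_config \<sigma> xs) = cN xs)
         \<Longrightarrow> cost N cN (symmetrize N \<gamma>) = cost N cN \<gamma>"
proof -
  have g0: "\<gamma> ys \<ge> 0" for ys using pr by (simp add: is_prob_N_def)
  have lamq: "(\<Sum>ys\<in>configs N. \<gamma> ys * ev N ys a) = lam a" for a
  proof -
    have "(\<Sum>ys\<in>configs N. \<gamma> ys * ev N ys a) =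
        (\<Sum>ys\<in>configs N. \<gamma> ys * (\<Sum>k<N. if ys ! k = a then 1 else 0)) / real N"
    proof -
      have "ev N ys a = (\<Sum>k<N. if ys ! k = a then 1 else 0) / real N" if "ys \<in> configs N" for ys
      proof -
        have "(\<Sum>k<N. if ys ! k = a then 1 else (0::real)) = (\<Sum>k\<in>{k\<in>{..<N}. ys ! k = a}. 1)"
          by (rule sum.inter_filter[symmetric]) simp
        also have "{k\<in>{..<N}. ys ! k = a} = {k. k < length ys \<and> ys ! k = a}" using that by auto
        finally show ?thesis by (simp add: ev_def count_list_card)
      qed
      then have "(\<Sum>ys\<in>configs N. \<gamma> ys * ev N ys a) =
          (\<Sum>ys\<in>configs N. \<gamma> ys * (\<Sum>k<N. if ys ! k = a then 1 else 0) / real N)"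
        by (intro sum.cong refl) (simp del: in_configs)
      then show ?thesis by (simp only: sum_divide_distrib)
    qed
    also have "(\<Sum>ys\<in>configs N. \<gamma> ys * (\<Sum>k<N. if ys ! k = a then 1 else 0)) =
        (\<Sum>k<N. \<Sum>ys\<in>configs N. if ys ! k = a then \<gamma> ys else 0)"
      by (simp add: sum_distrib_left sum.swap[of _ "configs N"] if_distrib cong: if_cong)
    also have "\<dots> = (\<Sum>k<N. marg N k \<gamma> a)"
      unfolding marg_def by (intro sum.cong refl sum.inter_filter[symmetric]) simp
    also have "\<dots> = (\<Sum>k<N. lam a)" using mg by simp
    finally show ?thesis using N by simp
  qed
  have dec: "symmetrize N \<gamma> = (\<lambda>xs. \<Sum>ys\<in>configs N. \<gamma> ys * Dc N ys xs)"
    by (rule symmetrize_decomp)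
  show "kant_adm N lam (symmetrize N \<gamma>)"
    unfolding dec by (rule kant_adm_comb) (use N g0 lamq lp in auto)
  assume symc: "\<forall>\<sigma> xs. \<sigma> permutes {0..<N} \<and> length xs = N \<longrightarrow> cN (perm_config \<sigma> xs) = cN xs"
  have "cost N cN (symmetrize N \<gamma>) = (\<Sum>ys\<in>configs N. ereal (\<gamma> ys) * cost N cN (Dc N ys))"
    unfolding dec by (rule cost_lin) (auto simp: g0 Dc_nonneg)
  also have "\<dots> = cost N cN \<gamma>"
    unfolding cost_def by (intro sum.cong refl) (simp add: cost_Dc_sym[OF _ symc, unfolded cost_def])
  finally show "cost N cN (symmetrize N \<gamma>) = cost N cN \<gamma>" .
qed



definition Pr :: "nat \<Rightarrow> (nat \<times> nat) set" where "Pr N = {(i, j). i < j \<and> j < N}"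
definition Pr2 :: "nat \<Rightarrow> (nat \<times> nat) set" where "Pr2 N = {(i, j). i < N \<and> j < N \<and> i \<noteq> j}"
definition rho :: "nat \<Rightarrow> nat \<Rightarrow> nat" where "rho N i = (if i < N then N - Suc i else i)"

lemma finite_Pr[simp]: "finite (Pr N)"
  by (rule finite_subset[of _ "{..<N} \<times> {..<N}"]) (auto simp: Pr_def)

lemma finite_Pr2[simp]: "finite (Pr2 N)"
  by (rule finite_subset[of _ "{..<N} \<times> {..<N}"]) (auto simp: Pr2_def)

lemma rho_rho[simp]: "rho N (rho N i) = i"
  by (auto simp: rho_def)

lemma rho_permutes: "rho N permutes {0..<N}"
proof (rule bij_imp_permutes)
  show "bij_betw (rho N) {0..<N} {0..<N}"
    by (rule bij_betw_byWitness[where f'="rho N"]) (auto simp: rho_def)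
qed (auto simp: rho_def)

lemma Pr2_image:
  assumes s: "\<sigma> permutes {0..<N}"
  shows "(\<lambda>(i, j). (\<sigma> i, \<sigma> j)) ` Pr2 N \<subseteq> Pr2 N"
proof
  fix x assume "x \<in> (\<lambda>(i, j). (\<sigma> i, \<sigma> j)) ` Pr2 N"
  then obtain i j where x: "x = (\<sigma> i, \<sigma> j)" and ij: "i < N" "j < N" "i \<noteq> j"
    by (auto simp: Pr2_def)
  have "\<sigma> i \<in> {0..<N}" "\<sigma> j \<in> {0..<N}" using ij permutes_in_image[OF s] by simp_all
  moreover have "\<sigma> i \<noteq> \<sigma> j" using ij(3) permutes_inj[OF s] by (simp add: inj_eq)
  ultimately show "x \<in> Pr2 N" using x by (simp add: Pr2_def)
qed

lemma pair_sum_sigma: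
  assumes s: "\<sigma> permutes {0..<N}"
  shows "(\<Sum>(i, j)\<in>Pr2 N. h (\<sigma> i) (\<sigma> j)) = (\<Sum>(i, j)\<in>Pr2 N. h i j)"
proof -
  have inv: "inv \<sigma> permutes {0..<N}" using s by (rule permutes_inv)
  have "bij_betw (\<lambda>(i, j). (\<sigma> i, \<sigma> j)) (Pr2 N) (Pr2 N)"
  proof (rule bij_betw_byWitness[where f'="\<lambda>(i, j). (inv \<sigma> i, inv \<sigma> j)"])
    show "\<forall>a\<in>Pr2 N. (\<lambda>(i, j). (inv \<sigma> i, inv \<sigma> j)) ((\<lambda>(i, j). (\<sigma> i, \<sigma> j)) a) = a"
    proof
      fix a assume "a \<in> Pr2 N"
      obtain i j where "a = (i, j)" by (cases a)
      then show "(\<lambda>(i, j). (inv \<sigma> i, inv \<sigma> j)) ((\<lambda>(i, j). (\<sigma> i, \<sigma> j)) a) = a"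
        by (simp add: permutes_inverses(2)[OF s])
    qed
    show "\<forall>a\<in>Pr2 N. (\<lambda>(i, j). (\<sigma> i, \<sigma> j)) ((\<lambda>(i, j). (inv \<sigma> i, inv \<sigma> j)) a) = a"
    proof
      fix a assume "a \<in> Pr2 N"
      obtain i j where "a = (i, j)" by (cases a)
      then show "(\<lambda>(i, j). (\<sigma> i, \<sigma> j)) ((\<lambda>(i, j). (inv \<sigma> i, inv \<sigma> j)) a) = a"
        by (simp add: permutes_inverses(1)[OF s])
    qed
    show "(\<lambda>(i, j). (\<sigma> i, \<sigma> j)) ` Pr2 N \<subseteq> Pr2 N" by (rule Pr2_image[OF s])
    show "(\<lambda>(i, j). (inv \<sigma> i, inv \<sigma> j)) ` Pr2 N \<subseteq> Pr2 N" by (rule Pr2_image[OF inv])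
  qed
  from sum.reindex_bij_betw[OF this, of "\<lambda>(i, j). h i j"] show ?thesis
    by (simp add: case_prod_beta')
qed

lemma Pr_rev:
  "(\<Sum>(i, j)\<in>Pr N. F (rho N i) (rho N j)) = (\<Sum>(i, j)\<in>Pr N. F j i)"
proof -
  have "bij_betw (\<lambda>(p, q). (rho N q, rho N p)) (Pr N) (Pr N)"
    by (rule bij_betw_byWitness[where f'="\<lambda>(p, q). (rho N q, rho N p)"]) (auto simp: Pr_def rho_def)
  from sum.reindex_bij_betw[OF this, of "\<lambda>(i, j). F (rho N i) (rho N j)"] show ?thesis
    by (simp add: case_prod_beta')
qed

lemma Pr_split:
  fixes F :: "nat \<Rightarrow> nat \<Rightarrow> 'b::comm_monoid_add"
  shows "(\<Sum>(i, j)\<in>Pr N. F i j) + (\<Sum>(i, j)\<in>Pr N. F j i) = (\<Sum>(i, j)\<in>Pr2 N. F i j)"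
proof -
  have eq: "Pr2 N = Pr N \<union> (\<lambda>(i, j). (j, i)) ` Pr N" by (auto simp: Pr_def Pr2_def)
  have dj: "Pr N \<inter> (\<lambda>(i, j). (j, i)) ` Pr N = {}" by (auto simp: Pr_def)
  have inj: "inj_on (\<lambda>(i, j). (j, i)) (Pr N)" by (auto simp: inj_on_def)
  have "(\<Sum>(i, j)\<in>Pr2 N. F i j) = (\<Sum>(i, j)\<in>Pr N. F i j) + (\<Sum>(i, j)\<in>(\<lambda>(i, j). (j, i)) ` Pr N. F i j)"
    unfolding eq by (rule sum.union_disjoint) (use dj in auto)
  also have "(\<Sum>(i, j)\<in>(\<lambda>(i, j). (j, i)) ` Pr N. F i j) = (\<Sum>(i, j)\<in>Pr N. F j i)"
    by (subst sum.reindex[OF inj]) (simp add: comp_def case_prod_beta')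
  finally show ?thesis by simp
qed

lemma ereal_half: "(z::ereal) + z = k \<Longrightarrow> z = ereal (1/2) * k"
  by (cases z) auto

lemma cost_Dc_pair:
  assumes ys: "length ys = N"
    and cNd: "\<forall>xs. length xs = N \<longrightarrow> cN xs = (\<Sum>(i, j)\<in>{(i, j). i < j \<and> j < N}. c (xs ! i) (xs ! j))"
  shows "cost N cN (Dc N ys) = ereal (1/2) * (\<Sum>(p, q)\<in>Pr2 N. c (ys ! p) (ys ! q))"
proof -
  let ?P = "{\<sigma>. \<sigma> permutes {0..<N}}"
  let ?r = "1 / fact N :: real"
  let ?K = "\<Sum>(p, q)\<in>Pr2 N. c (ys ! p) (ys ! q)"
  define A where "A \<sigma> = cN (perm_config \<sigma> ys)" for \<sigma>
  have A: "A \<sigma> = (\<Sum>(i, j)\<in>Pr N. c (ys ! \<sigma> i) (ys ! \<sigma> j))" if "\<sigma> \<in> ?P" for \<sigma>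
    unfolding A_def using cNd ys
    by (auto simp: Pr_def nth_perm_config intro!: sum.cong)
  have AA: "A \<sigma> + A (\<sigma> \<circ> rho N) = ?K" if s: "\<sigma> \<in> ?P" for \<sigma>
  proof -
    have s2: "\<sigma> \<circ> rho N \<in> ?P" using s rho_permutes permutes_compose by blast
    have "A (\<sigma> \<circ> rho N) = (\<Sum>(i, j)\<in>Pr N. c (ys ! \<sigma> (rho N i)) (ys ! \<sigma> (rho N j)))"
      using A[OF s2] by simp
    also have "\<dots> = (\<Sum>(i, j)\<in>Pr N. c (ys ! \<sigma> j) (ys ! \<sigma> i))"
      by (rule Pr_rev[where F="\<lambda>a b. c (ys ! \<sigma> a) (ys ! \<sigma> b)"])
    finally have "A \<sigma> + A (\<sigma> \<circ> rho N) = (\<Sum>(i, j)\<in>Pr2 N. c (ys ! \<sigma> i) (ys ! \<sigma> j))"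
      using A[OF s] Pr_split[where F="\<lambda>a b. c (ys ! \<sigma> a) (ys ! \<sigma> b)"] by simp
    also have "\<dots> = ?K"
      using s pair_sum_sigma[where h="\<lambda>a b. c (ys ! a) (ys ! b)"] by simp
    finally show ?thesis .
  qed
  define Z where "Z = (\<Sum>\<sigma>\<in>?P. ereal ?r * A \<sigma>)"
  have Z1: "cost N cN (Dc N ys) = Z" unfolding Z_def A_def by (rule cost_Dc[OF ys])
  have Z2: "Z = (\<Sum>\<sigma>\<in>?P. ereal ?r * A (\<sigma> \<circ> rho N))"
    unfolding Z_def by (rule sum_permutations_compose_right[OF rho_permutes])
  have "Z + Z = (\<Sum>\<sigma>\<in>?P. ereal ?r * A \<sigma> + ereal ?r * A (\<sigma> \<circ> rho N))"
    by (subst (2) Z2) (simp add: Z_def sum.distrib)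
  also have "\<dots> = (\<Sum>\<sigma>\<in>?P. ereal ?r * ?K)"
  proof (intro sum.cong refl)
    fix \<sigma> assume "\<sigma> \<in> ?P"
    have "ereal ?r * A \<sigma> + ereal ?r * A (\<sigma> \<circ> rho N) = ereal ?r * (A \<sigma> + A (\<sigma> \<circ> rho N))"
      using distrib_left_ereal_nn[of ?r "A \<sigma>" "A (\<sigma> \<circ> rho N)"] by (simp add: mult.commute)
    then show "ereal ?r * A \<sigma> + ereal ?r * A (\<sigma> \<circ> rho N) = ereal ?r * ?K"
      using AA[OF \<open>\<sigma> \<in> ?P\<close>] by simp
  qed
  also have "\<dots> = ereal (\<Sum>\<sigma>\<in>?P. ?r) * ?K"
    by (rule ereal_sum_left[symmetric]) simp
  also have "\<dots> = ?K" by (simp add: card_perms)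
  finally have "Z + Z = ?K" .
  then have "Z = ereal (1/2) * ?K" by (rule ereal_half)
  then show ?thesis using Z1 by simp
qed



lemma ereal_sum_const: "finite A \<Longrightarrow> (\<Sum>i\<in>A. (x::ereal)) = ereal (real (card A)) * x"
  using ereal_sum_left[of A "\<lambda>_. 1" x] by simp

lemma card_pairs:
  assumes ys: "length ys = N"
  shows "real (card {pq\<in>Pr2 N. ys ! fst pq = x \<and> ys ! snd pq = y}) =
     real (count_list ys x) * real (count_list ys y) - (if x = y then real (count_list ys x) else 0)"
proof -
  define Ix where "Ix = {p. p < N \<and> ys ! p = x}"
  define Iy where "Iy = {p. p < N \<and> ys ! p = y}"
  have fin: "finite Ix" "finite Iy" by (auto simp: Ix_def Iy_def)
  have cx: "card Ix = count_list ys x" and cy: "card Iy = count_list ys y"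
    using ys by (simp_all add: Ix_def Iy_def count_list_card)
  define D where "D = {(p, p) | p::nat. True}"
  have eq: "{pq\<in>Pr2 N. ys ! fst pq = x \<and> ys ! snd pq = y} = (Ix \<times> Iy) - D"
    by (auto simp: Pr2_def Ix_def Iy_def D_def)
  have int: "(Ix \<times> Iy) \<inter> D = (\<lambda>p. (p, p)) ` (Ix \<inter> Iy)"
    by (auto simp: D_def)
  have ci: "card ((Ix \<times> Iy) \<inter> D) = card (Ix \<inter> Iy)"
    unfolding int by (rule card_image) (auto simp: inj_on_def)
  have ii: "Ix \<inter> Iy = (if x = y then Ix else {})" by (auto simp: Ix_def Iy_def)
  have le: "card ((Ix \<times> Iy) \<inter> D) \<le> card (Ix \<times> Iy)"
    by (rule card_mono) (use fin in auto)
  have "card ((Ix \<times> Iy) - D) = card (Ix \<times> Iy) - card ((Ix \<times> Iy) \<inter> D)"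
    by (rule card_Diff_subset_Int) (use fin in auto)
  then have "real (card ((Ix \<times> Iy) - D)) = real (card (Ix \<times> Iy)) - real (card ((Ix \<times> Iy) \<inter> D))"
    using le by (simp add: of_nat_diff)
  also have "\<dots> = real (card Ix) * real (card Iy) - (if x = y then real (card Ix) else 0)"
    using ci ii by (simp add: card_cartesian_product)
  finally show ?thesis unfolding eq cx cy .
qed

lemma Kc_group:
  fixes ys :: "'a::finite list" and c :: "'a \<Rightarrow> 'a \<Rightarrow> ereal"
  assumes ys: "length ys = N"
  shows "(\<Sum>(p, q)\<in>Pr2 N. c (ys ! p) (ys ! q)) =
    (\<Sum>x\<in>UNIV. \<Sum>y\<in>UNIV. ereal (real (count_list ys x) * real (count_list ys y)
        - (if x = y then real (count_list ys x) else 0)) * c x y)"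
proof -
  let ?g = "\<lambda>pq. (ys ! fst pq, ys ! snd pq)"
  let ?h = "\<lambda>pq. c (ys ! fst pq) (ys ! snd pq)"
  have "(\<Sum>(p, q)\<in>Pr2 N. c (ys ! p) (ys ! q)) = (\<Sum>pq\<in>Pr2 N. ?h pq)"
    by (simp add: case_prod_beta')
  also have "\<dots> = (\<Sum>xy\<in>UNIV. \<Sum>pq\<in>{pq. pq \<in> Pr2 N \<and> ?g pq = xy}. ?h pq)"
    by (rule sum.group[symmetric]) auto
  also have "\<dots> = (\<Sum>xy\<in>UNIV. ereal (real (card {pq\<in>Pr2 N. ys ! fst pq = fst xy \<and> ys ! snd pq = snd xy})) * c (fst xy) (snd xy))"
  proof (intro sum.cong refl)
    fix xy :: "'a \<times> 'a"
    have "(\<Sum>pq\<in>{pq. pq \<in> Pr2 N \<and> ?g pq = xy}. ?h pq) = (\<Sum>pq\<in>{pq\<in>Pr2 N. ys ! fst pq = fst xy \<and> ys ! snd pq = snd xy}. c (fst xy) (snd xy))"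
      by (intro sum.cong) auto
    also have "\<dots> = ereal (real (card {pq\<in>Pr2 N. ys ! fst pq = fst xy \<and> ys ! snd pq = snd xy})) * c (fst xy) (snd xy)"
      by (rule ereal_sum_const) simp
    finally show "(\<Sum>pq\<in>{pq. pq \<in> Pr2 N \<and> ?g pq = xy}. ?h pq) = \<dots>" .
  qed
  also have "\<dots> = (\<Sum>x\<in>UNIV. \<Sum>y\<in>UNIV. ereal (real (card {pq\<in>Pr2 N. ys ! fst pq = x \<and> ys ! snd pq = y})) * c x y)"
    by (subst sum.cartesian_product) (simp add: case_prod_beta')
  also have "\<dots> = (\<Sum>x\<in>UNIV. \<Sum>y\<in>UNIV. ereal (real (count_list ys x) * real (count_list ys y)
        - (if x = y then real (count_list ys x) else 0)) * c x y)"
    by (simp only: card_pairs[OF ys])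
  finally show ?thesis .
qed

lemma cost_Dc_J:
  fixes ys :: "'a::finite list" and c :: "'a \<Rightarrow> 'a \<Rightarrow> ereal"
  assumes ys: "length ys = N" and N: "N \<ge> 1"
    and cNd: "\<forall>xs. length xs = N \<longrightarrow> cN xs = (\<Sum>(i, j)\<in>{(i, j). i < j \<and> j < N}. c (xs ! i) (xs ! j))"
  shows "cost N cN (Dc N ys) = (\<Sum>x\<in>UNIV. \<Sum>y\<in>UNIV.
     ereal ((real N)^2 / 2 * ev N ys x * ev N ys y - (if x = y then real N / 2 * ev N ys x else 0)) * c x y)"
proof -
  have "cost N cN (Dc N ys) = ereal (1/2) * (\<Sum>x\<in>UNIV. \<Sum>y\<in>UNIV. ereal (real (count_list ys x) * real (count_list ys y)
        - (if x = y then real (count_list ys x) else 0)) * c x y)"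
    using cost_Dc_pair[OF ys cNd] Kc_group[OF ys, of c] by simp
  also have "\<dots> = (\<Sum>x\<in>UNIV. \<Sum>y\<in>UNIV. ereal (1/2) * (ereal (real (count_list ys x) * real (count_list ys y)
        - (if x = y then real (count_list ys x) else 0)) * c x y))"
    by (simp add: ereal_sum_right)
  also have "\<dots> = (\<Sum>x\<in>UNIV. \<Sum>y\<in>UNIV.
     ereal ((real N)^2 / 2 * ev N ys x * ev N ys y - (if x = y then real N / 2 * ev N ys x else 0)) * c x y)"
  proof (intro sum.cong refl)
    fix x y
    have h: "(1/2) * (real (count_list ys x) * real (count_list ys y) - (if x = y then real (count_list ys x) else 0))
       = (real N)^2 / 2 * ev N ys x * ev N ys y - (if x = y then real N / 2 * ev N ys x else 0)"
      using N by (simp add: ev_def field_simps power2_eq_square)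
    have e: "ereal (1/2) * (ereal (real (count_list ys x) * real (count_list ys y)
        - (if x = y then real (count_list ys x) else 0)) * c x y) =
      ereal ((1/2) * (real (count_list ys x) * real (count_list ys y) - (if x = y then real (count_list ys x) else 0))) * c x y"
      by (simp only: times_ereal.simps(1)[symmetric] mult.assoc)
    show "ereal (1/2) * (ereal (real (count_list ys x) * real (count_list ys y)
        - (if x = y then real (count_list ys x) else 0)) * c x y) =
      ereal ((real N)^2 / 2 * ev N ys x * ev N ys y - (if x = y then real N / 2 * ev N ys x else 0)) * c x y"
      by (rule e[unfolded h])
  qed
  finally show ?thesis .
qed



lemma psi_props:
  fixes \<Lambda> :: "'a::{finite,linorder} \<Rightarrow> real"
  assumes p: "prob_1N N \<Lambda>" and N: "N \<ge> 1"
  shows "\<exists>ys. length ys = N \<and> ev N ys = \<Lambda> \<and> psi N \<Lambda> = Dc N ys"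
proof -
  have ip: "is_prob \<Lambda>" and ii: "\<And>a. real N * \<Lambda> a \<in> \<int>" using p by (auto simp: prob_1N_def)
  define n where "n a = nat \<lfloor>real N * \<Lambda> a\<rfloor>" for a
  have rn: "real (n a) = real N * \<Lambda> a" for a
  proof -
    obtain k where k: "real N * \<Lambda> a = of_int k" using ii[of a] by (auto elim: Ints_cases)
    have "\<Lambda> a \<ge> 0" using ip by (simp add: is_prob_def)
    then have "k \<ge> 0" using k by (metis of_int_0_le_iff zero_le_mult_iff of_nat_0_le_iff)
    then show ?thesis using k by (simp add: n_def)
  qed
  define M where "M = (\<Sum>a\<in>UNIV. replicate_mset (n a) a)"
  define ys0 where "ys0 = sorted_list_of_multiset M"
  have cnt: "count_list ys0 a = n a" for a
  proof -
    have "count_list ys0 a = count (mset ys0) a" by (simp add: count_mset)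
    also have "\<dots> = count M a" by (simp add: ys0_def)
    also have "\<dots> = (\<Sum>b\<in>UNIV. if a = b then n b else 0)" by (simp add: M_def count_sum)
    also have "\<dots> = n a" by simp
    finally show ?thesis .
  qed
  have P0: "sorted ys0 \<and> (\<forall>a. real (count_list ys0 a) = real N * \<Lambda> a)"
    using cnt rn by (simp add: ys0_def)
  have uniq: "ys = ys0" if "sorted ys \<and> (\<forall>a. real (count_list ys a) = real N * \<Lambda> a)" for ys
  proof -
    have "mset ys = mset ys0"
    proof (rule multiset_eqI)
      fix x
      have "real (count_list ys x) = real (count_list ys0 x)" using that P0 by simp
      then show "count (mset ys) x = count (mset ys0) x" by (simp add: count_mset)
    qed
    then have "sort ys0 = ys" using that properties_for_sort by blast
    moreover have "sort ys0 = ys0" using P0 by (simp add: sorted_sort_id)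
    ultimately show ?thesis by simp
  qed
  have the: "(THE ys. sorted ys \<and> (\<forall>a. real (count_list ys a) = real N * \<Lambda> a)) = ys0"
    using P0 uniq by (rule the_equality)
  have len: "length ys0 = N"
  proof -
    have "real (length ys0) = (\<Sum>a\<in>UNIV. real (count_list ys0 a))"
      by (simp flip: sum_count_list of_nat_sum)
    also have "\<dots> = real N * (\<Sum>a\<in>UNIV. \<Lambda> a)" by (simp add: cnt rn sum_distrib_left)
    also have "\<dots> = real N" using ip by (simp add: is_prob_def)
    finally show ?thesis by simp
  qed
  have "ev N ys0 = \<Lambda>" using N by (auto simp: ev_def cnt rn)
  moreover have "psi N \<Lambda> = Dc N ys0" by (simp add: psi_def the Dc_def)
  ultimately show ?thesis using len by blast
qed

lemma prob_1N_ev: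
  fixes ys :: "'a::finite list"
  assumes "length ys = N" "N \<ge> 1"
  shows "prob_1N N (ev N ys)"
proof -
  have "real N * ev N ys a = real (count_list ys a)" for a using assms by (simp add: ev_def)
  then show ?thesis using assms sum_ev[OF assms]
    by (auto simp: prob_1N_def is_prob_def ev_nonneg)
qed

lemma red_to_kant:
  fixes lam :: "'a::{finite,linorder} \<Rightarrow> real"
  assumes N: "N \<ge> 1" and lp: "is_prob lam" and ra: "red_adm N lam \<alpha> \<Lambda>"
    and cNd: "\<forall>xs. length xs = N \<longrightarrow> cN xs = (\<Sum>(i, j)\<in>{(i, j). i < j \<and> j < N}. c (xs ! i) (xs ! j))"
  shows "kant_adm N lam (\<lambda>xs. \<Sum>\<nu>\<in>UNIV. \<alpha> \<nu> * psi N (\<Lambda> \<nu>) xs)"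
    and "cost N cN (\<lambda>xs. \<Sum>\<nu>\<in>UNIV. \<alpha> \<nu> * psi N (\<Lambda> \<nu>) xs) = I_red N c \<alpha> \<Lambda>"
proof -
  have a0: "\<And>\<nu>. \<alpha> \<nu> \<ge> 0" and pp: "\<And>\<nu>. prob_1N N (\<Lambda> \<nu>)"
    and lq: "\<And>a. (\<Sum>\<nu>\<in>UNIV. \<alpha> \<nu> * \<Lambda> \<nu> a) = lam a"
    using ra by (auto simp: red_adm_def)
  have "\<forall>\<nu>. \<exists>ys. length ys = N \<and> ev N ys = \<Lambda> \<nu> \<and> psi N (\<Lambda> \<nu>) = Dc N ys"
    using psi_props[OF pp N] by blast
  then obtain ys where ys: "\<And>\<nu>. length (ys \<nu>) = N" "\<And>\<nu>. ev N (ys \<nu>) = \<Lambda> \<nu>"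
    "\<And>\<nu>. psi N (\<Lambda> \<nu>) = Dc N (ys \<nu>)"
    by metis
  have eqg: "(\<lambda>xs. \<Sum>\<nu>\<in>UNIV. \<alpha> \<nu> * psi N (\<Lambda> \<nu>) xs) = (\<lambda>xs. \<Sum>\<nu>\<in>UNIV. \<alpha> \<nu> * Dc N (ys \<nu>) xs)"
    by (simp add: ys(3))
  show "kant_adm N lam (\<lambda>xs. \<Sum>\<nu>\<in>UNIV. \<alpha> \<nu> * psi N (\<Lambda> \<nu>) xs)"
    unfolding eqg by (rule kant_adm_comb) (use a0 ys N lq lp in auto)
  have "cost N cN (\<lambda>xs. \<Sum>\<nu>\<in>UNIV. \<alpha> \<nu> * Dc N (ys \<nu>) xs) = (\<Sum>\<nu>\<in>UNIV. ereal (\<alpha> \<nu>) * cost N cN (Dc N (ys \<nu>)))"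
    by (rule cost_lin) (auto simp: a0 Dc_nonneg)
  also have "\<dots> = I_red N c \<alpha> \<Lambda>"
    unfolding I_red_def by (intro sum.cong refl) (simp only: cost_Dc_J[OF ys(1) N cNd] ys(2))
  finally show "cost N cN (\<lambda>xs. \<Sum>\<nu>\<in>UNIV. \<alpha> \<nu> * psi N (\<Lambda> \<nu>) xs) = I_red N c \<alpha> \<Lambda>"
    unfolding eqg .
qed



theorem theorem5p3:
  fixes N :: nat
    and cN :: "'a::{finite,linorder} list \<Rightarrow> ereal"
    and c :: "'a \<Rightarrow> 'a \<Rightarrow> ereal"
    and lam :: "'a \<Rightarrow> real"
  assumes N2: "N \<ge> 2"
    and cN_no_minf: "\<forall>xs. cN xs \<noteq> -\<infinity>"
    and lam_prob: "is_prob lam"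
  shows "(\<exists>\<gamma>. SAE N lam \<gamma> \<and> kant_min N cN lam \<gamma> \<and>
            ((\<forall>\<sigma> xs. \<sigma> permutes {0..<N} \<and> length xs = N \<longrightarrow> cN (perm_config \<sigma> xs) = cN xs) \<longrightarrow>
              (\<forall>\<gamma>'. is_prob_N N \<gamma>' \<and> (\<forall>k<N. marg N k \<gamma>' = lam) \<longrightarrow>
                     cost N cN \<gamma> \<le> cost N cN \<gamma>')))
       \<and> (((\<forall>x y. c x y \<noteq> -\<infinity>) \<and>
            (\<forall>xs. length xs = N \<longrightarrow>
                  cN xs = (\<Sum>(i, j)\<in>{(i, j). i < j \<and> j < N}. c (xs ! i) (xs ! j)))) \<longrightarrow>
          (\<exists>\<alpha> \<Lambda>. red_min N c lam \<alpha> \<Lambda> \<and>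
                  (\<forall>\<gamma>. kant_min N cN lam \<gamma> \<longrightarrow> cost N cN \<gamma> = I_red N c \<alpha> \<Lambda>))
          \<and> (\<forall>\<alpha> \<Lambda>. red_min N c lam \<alpha> \<Lambda> \<longrightarrow>
                  kant_min N cN lam (\<lambda>xs. \<Sum>\<nu>\<in>UNIV. \<alpha> \<nu> * psi N (\<Lambda> \<nu>) xs)))"
proof -
  have N1: "N \<ge> 1" using N2 by simp
  have cm: "\<And>xs. cN xs \<noteq> -\<infinity>" using cN_no_minf by blast
  obtain \<alpha> :: "'a \<Rightarrow> real" and ys where a0: "\<forall>\<nu>. \<alpha> \<nu> \<ge> 0" and yl: "\<forall>\<nu>. length (ys \<nu>) = N"
    and lq: "\<forall>a. (\<Sum>\<nu>\<in>UNIV. \<alpha> \<nu> * ev N (ys \<nu>) a) = lam a"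
    and km: "kant_min N cN lam (\<lambda>xs. \<Sum>\<nu>\<in>UNIV. \<alpha> \<nu> * Dc N (ys \<nu>) xs)"
    using part_a[where cN=cN, OF N1 cm lam_prob] by (elim exE conjE) (rule that)
  define g where "g = (\<lambda>xs. \<Sum>\<nu>\<in>UNIV. \<alpha> \<nu> * Dc N (ys \<nu>) xs)"
  have kmg: "kant_min N cN lam g" using km by (simp add: g_def)
  have sae: "SAE N lam g"
    unfolding SAE_def
  proof (intro exI[of _ "\<lambda>k \<nu>. ys \<nu> ! k"] exI[of _ \<alpha>] conjI allI)
    fix \<nu> show "\<alpha> \<nu> \<ge> 0" using a0 by simp
  next
    fix a
    have "emp N (\<lambda>k \<nu>. ys \<nu> ! k) \<nu> a = ev N (ys \<nu>) a" for \<nu>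
      using yl by (simp add: emp_def ev_def count_list_card)
    then show "(\<Sum>\<nu>\<in>UNIV. \<alpha> \<nu> * emp N (\<lambda>k \<nu>. ys \<nu> ! k) \<nu> a) = lam a" using lq by simp
  next
    have "map (\<lambda>k. ys \<nu> ! k) [0..<N] = ys \<nu>" for \<nu>
      using map_nth[of "ys \<nu>"] yl by simp
    then show "g = (\<lambda>xs. \<Sum>\<nu>\<in>UNIV. \<alpha> \<nu> * symmetrize N (dirac_cfg (map (\<lambda>k. ys \<nu> ! k) [0..<N])) xs)"
      by (simp add: g_def Dc_def)
  qed
  have part2: "(\<forall>\<sigma> xs. \<sigma> permutes {0..<N} \<and> length xs = N \<longrightarrow> cN (perm_config \<sigma> xs) = cN xs) \<longrightarrow>
              (\<forall>\<gamma>'. is_prob_N N \<gamma>' \<and> (\<forall>k<N. marg N k \<gamma>' = lam) \<longrightarrow>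
                     cost N cN g \<le> cost N cN \<gamma>')"
  proof (intro impI allI)
    fix \<gamma>' assume symc: "\<forall>\<sigma> xs. \<sigma> permutes {0..<N} \<and> length xs = N \<longrightarrow> cN (perm_config \<sigma> xs) = cN xs"
      and h: "is_prob_N N \<gamma>' \<and> (\<forall>k<N. marg N k \<gamma>' = lam)"
    have "kant_adm N lam (symmetrize N \<gamma>')" using sym_part(1)[OF N1 _ _ lam_prob] h by blast
    then have "cost N cN g \<le> cost N cN (symmetrize N \<gamma>')" using kmg by (simp add: kant_min_def)
    also have "\<dots> = cost N cN \<gamma>'" using sym_part(2)[OF N1 _ _ lam_prob, of \<gamma>' cN] h symc by blast
    finally show "cost N cN g \<le> cost N cN \<gamma>'" .
  qed
  have partb: "((\<forall>x y. c x y \<noteq> -\<infinity>) \<and>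
            (\<forall>xs. length xs = N \<longrightarrow>
                  cN xs = (\<Sum>(i, j)\<in>{(i, j). i < j \<and> j < N}. c (xs ! i) (xs ! j)))) \<longrightarrow>
          (\<exists>\<alpha> \<Lambda>. red_min N c lam \<alpha> \<Lambda> \<and>
                  (\<forall>\<gamma>. kant_min N cN lam \<gamma> \<longrightarrow> cost N cN \<gamma> = I_red N c \<alpha> \<Lambda>))
          \<and> (\<forall>\<alpha> \<Lambda>. red_min N c lam \<alpha> \<Lambda> \<longrightarrow>
                  kant_min N cN lam (\<lambda>xs. \<Sum>\<nu>\<in>UNIV. \<alpha> \<nu> * psi N (\<Lambda> \<nu>) xs))"
  proof (intro impI)
    assume "(\<forall>x y. c x y \<noteq> -\<infinity>) \<and>
            (\<forall>xs. length xs = N \<longrightarrow> cN xs = (\<Sum>(i, j)\<in>{(i, j). i < j \<and> j < N}. c (xs ! i) (xs ! j)))"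
    then have cNd: "\<forall>xs. length xs = N \<longrightarrow> cN xs = (\<Sum>(i, j)\<in>{(i, j). i < j \<and> j < N}. c (xs ! i) (xs ! j))"
      by blast
    define \<Lambda>0 where "\<Lambda>0 \<nu> = ev N (ys \<nu>)" for \<nu>
    have ra0: "red_adm N lam \<alpha> \<Lambda>0"
      unfolding red_adm_def \<Lambda>0_def using a0 yl lq N1 prob_1N_ev by blast
    have I0: "I_red N c \<alpha> \<Lambda>0 = cost N cN g"
    proof -
      have "cost N cN g = (\<Sum>\<nu>\<in>UNIV. ereal (\<alpha> \<nu>) * cost N cN (Dc N (ys \<nu>)))"
        unfolding g_def by (rule cost_lin) (auto simp: a0 Dc_nonneg)
      also have "\<dots> = I_red N c \<alpha> \<Lambda>0"
        unfolding I_red_def \<Lambda>0_def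
        by (intro sum.cong refl) (simp only: cost_Dc_J[OF yl[rule_format] N1 cNd])
      finally show ?thesis by simp
    qed
    have gle: "cost N cN g \<le> cost N cN \<gamma>'" if "kant_adm N lam \<gamma>'" for \<gamma>'
      using kmg that by (simp add: kant_min_def)
    have gadm: "kant_adm N lam g" using kmg by (simp add: kant_min_def)
    have RK: "kant_adm N lam (\<lambda>xs. \<Sum>\<nu>\<in>UNIV. \<alpha>' \<nu> * psi N (\<Lambda>' \<nu>) xs) \<and>
        cost N cN (\<lambda>xs. \<Sum>\<nu>\<in>UNIV. \<alpha>' \<nu> * psi N (\<Lambda>' \<nu>) xs) = I_red N c \<alpha>' \<Lambda>'"
      if "red_adm N lam \<alpha>' \<Lambda>'" for \<alpha>' \<Lambda>'
      using red_to_kant[OF N1 lam_prob that cNd] by blast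
    have rm0: "red_min N c lam \<alpha> \<Lambda>0"
      unfolding red_min_def
    proof (intro conjI allI impI ra0)
      fix \<alpha>' \<Lambda>' assume "red_adm N lam \<alpha>' \<Lambda>'"
      from RK[OF this] show "I_red N c \<alpha> \<Lambda>0 \<le> I_red N c \<alpha>' \<Lambda>'"
        using gle I0 by metis
    qed
    have all: "\<forall>\<gamma>. kant_min N cN lam \<gamma> \<longrightarrow> cost N cN \<gamma> = I_red N c \<alpha> \<Lambda>0"
    proof (intro allI impI)
      fix \<gamma> assume "kant_min N cN lam \<gamma>"
      then have "kant_adm N lam \<gamma>" "cost N cN \<gamma> \<le> cost N cN g"
        using gadm by (auto simp: kant_min_def)
      then show "cost N cN \<gamma> = I_red N c \<alpha> \<Lambda>0" using gle I0 by (metis order.antisym)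
    qed
    have last: "\<forall>\<alpha> \<Lambda>. red_min N c lam \<alpha> \<Lambda> \<longrightarrow>
                  kant_min N cN lam (\<lambda>xs. \<Sum>\<nu>\<in>UNIV. \<alpha> \<nu> * psi N (\<Lambda> \<nu>) xs)"
    proof (intro allI impI)
      fix \<alpha>' \<Lambda>' assume rm: "red_min N c lam \<alpha>' \<Lambda>'"
      then have ra: "red_adm N lam \<alpha>' \<Lambda>'" and le: "I_red N c \<alpha>' \<Lambda>' \<le> I_red N c \<alpha> \<Lambda>0"
        using ra0 by (auto simp: red_min_def)
      note R = RK[OF ra]
      show "kant_min N cN lam (\<lambda>xs. \<Sum>\<nu>\<in>UNIV. \<alpha>' \<nu> * psi N (\<Lambda>' \<nu>) xs)"
        unfolding kant_min_def
      proof (intro conjI allI impI)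
        show "kant_adm N lam (\<lambda>xs. \<Sum>\<nu>\<in>UNIV. \<alpha>' \<nu> * psi N (\<Lambda>' \<nu>) xs)" using R by blast
        fix \<gamma>'' assume "kant_adm N lam \<gamma>''"
        then have "cost N cN g \<le> cost N cN \<gamma>''" by (rule gle)
        then show "cost N cN (\<lambda>xs. \<Sum>\<nu>\<in>UNIV. \<alpha>' \<nu> * psi N (\<Lambda>' \<nu>) xs) \<le> cost N cN \<gamma>''"
          using R le I0 by (metis order.trans)
      qed
    qed
    show "(\<exists>\<alpha> \<Lambda>. red_min N c lam \<alpha> \<Lambda> \<and>
                  (\<forall>\<gamma>. kant_min N cN lam \<gamma> \<longrightarrow> cost N cN \<gamma> = I_red N c \<alpha> \<Lambda>))
          \<and> (\<forall>\<alpha> \<Lambda>. red_min N c lam \<alpha> \<Lambda> \<longrightarrow>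
                  kant_min N cN lam (\<lambda>xs. \<Sum>\<nu>\<in>UNIV. \<alpha> \<nu> * psi N (\<Lambda> \<nu>) xs))"
      using rm0 all last by blast
  qed
  show ?thesis using sae kmg part2 partb by blast
qed

end
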